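(* Fix $K\in\mathbb N$ and $\epsilon=1/(2HK)$. Let $\bar\varTheta$ be a finite set of parameter vectors and $\iota:\varTheta\to\bar\varTheta$ a measurable surjective map such that for every $\theta\in\varTheta$, $\|\Pr^\pi_{\iota(\theta)}-\Pr^\pi_\theta\|_{\mathrm{TV}}\le2H\epsilon$ for all $\pi\in\varPi$ and $\Pr^-_{\iota(\theta)}(\tau)\ge(1+\epsilon)^{-2H}\Pr^-_\theta(\tau)$ for all $\tau\in\mathscr T$. Then the Bayesian regret of the PS4POMDPs algorithm satisfies $$\mathrm{BReg}(\phi^{\mathrm{PS4POMDPs}},K)\le2H+H\,\mathbb E\Big[\sum_{k=1}^K\max_{\bar\theta\in\bar\varTheta(\mathcal D_k)}\|\Pr^{\tilde\pi^k}_{\bar\theta}-\Pr^{\tilde\pi^k}_{\theta^*}\|_{\mathrm{TV}}\Big].$$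
   Context: A finite-horizon POMDP is a tuple $(\mathscr S,\mathscr A,\mathscr O,H,b_1,T,Z,r)$ with finite state set $\mathscr S$ ($|\mathscr S|=S$), finite action set $\mathscr A$ ($|\mathscr A|=A$), finite observation set $\mathscr O$ ($|\mathscr O|=O$), horizon $H\in\mathbb N$, initial state distribution $b_1\in\Delta(\mathscr S)$, transition kernels $T_h:\mathscr S\times\mathscr A\to\Delta(\mathscr S)$ for $h\in[H-1]$, observation kernels $Z_h:\mathscr S\to\Delta(\mathscr O)$ for $h\in[H]$, and rewards $r_h:\mathscr O\times\mathscr A\to[0,1]$ for $h\in[H]$. A (deterministic) policy $\pi=(\pi_h)_{h=1}^H$ consists of maps $\pi_h:(\mathscr O\times\mathscr A)^{h-1}\times\mathscr O\to\mathscr A$; $\varPi$ is the set of all such policies, and $\pi_h(a\mid\tau_{h-1},o):=\mathbf 1\{\pi_h(\tau_{h-1},o)=a\}$. A trajectory is $\tau=(o_h,a_h)_{h=1}^H\in\mathscr T:=(\mathscr O\times\mathscr A)^H$, and $\tau_h$ denotes its first $h$ observation–action pairs. Its probability under $\pi$ is $\Pr^\pi(\tau)=\pi(\tau)\Pr^-(\tau)$, where $\pi(\tau)=\prod_{h=1}^H\pi_h(a_h\mid\tau_{h-1},o_h)$ and $\Pr^-(\tau)=\sum_{s_{1:H}\in\mathscr S^H}b_1(s_1)Z_H(o_H\mid s_H)\prod_{h=1}^{H-1}Z_h(o_h\mid s_h)T_h(s_{h+1}\mid s_h,a_h)$. The value of $\pi$ is $V^\pi=\sum_{\tau\in\mathscr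 T}\Pr^\pi(\tau)\sum_{h=1}^Hr_h(o_h,a_h)$ and $V^*=\max_{\pi\in\varPi}V^\pi$. Learning setting: $\mathscr S,\mathscr A,\mathscr O,H,r$ are known; $(b_1,T,Z)=(b_1^\theta,T^\theta,Z^\theta)$ depends on a parameter $\theta$ in a known Borel parameter set $\varTheta$ via a known measurable parameterization; quantities of the POMDP with parameter $\theta$ carry a subscript $\theta$ ($\Pr^\pi_\theta,\Pr^-_\theta,V^\pi_\theta,V^*_\theta$). The true parameter $\theta^*$ is random with prior $\nu^1\in\Delta(\varTheta)$. In episodes $k=1,2,\dots$, with data $\mathcal D_k=(\tau^j,\pi^j)_{j=1}^{k-1}$, a learning algorithm $\phi=(\phi_k)_k$ draws a policy $\pi^k\sim\phi_k(\mathcal D_k)\in\Delta(\varPi)$, applies it during the whole episode and observes the trajectory $\tau^k\sim\Pr^{\pi^k}_{\theta^*}$. The Bayesian regret over $K$ episodes is $\mathrm{BReg}(\phi,K)=\mathbb E^\phi\big[\sum_{k=1}^K(V^*_{\theta^*}-V^{\pi^k}_{\theta^*})\big]$, the expectation being over $\theta^*\sim\nu^1$, the algorithm's randomness and the trajectories. The PS4POMDPs algorithm: in episode $k$, given the posterior $\nu^k$ ($\nu^1$ = prior), sample $\tilde\theta^k\sim\nu^k$, compute (with an exact planner) $\tilde\pi^k\in\arg\max_{\pi\in\varPi}V^\pi_{\tilde\theta^k}$, play $\pi^k=\tilde\pi^k$, observe $\tau^k$, and update by Bayes' rule $\frac{d\nu^{k+1}}{d\nu^k}(\theta)=\Pr^{\tilde\pi^k}_\theta(\tau^k)\big/\int_\varTheta\Pr^{\tilde\pi^k}_{\theta'}(\tau^k)\,d\nu^k(\theta')$.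 Parameters are identified directly with vectors $(b_1,T,Z)\in[0,1]^{S+(H-1)S^2A+HSO}$ whose blocks are probability distributions; any such vector defines $\Pr^\pi_\theta$, $\Pr^-_\theta$. $\|\cdot\|_{\mathrm{TV}}$ is total variation distance between distributions on $\mathscr T$. Log-likelihood: $\ell(\theta,\mathcal D_k)=\sum_{j=1}^{k-1}\log\Pr^{\pi^j}_\theta(\tau^j)$; $\bar\ell^*(\mathcal D_k)=\max_{\theta\in\bar\varTheta}\ell(\theta,\mathcal D_k)$ (maximum over the finite set $\bar\varTheta$). Confidence set: $\bar\varTheta(\mathcal D_k)=\{\bar\theta\in\bar\varTheta:\ \ell(\bar\theta,\mathcal D_k)\ge\bar\ell^*(\mathcal D_k)-\log(K|\bar\varTheta|)-1\}$. *)

theory Defs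
  imports "HOL-Probability.Probability"
begin

text \<open>A parameter vector (b_1, T, Z).  Steps are 1-based as in the paper:
  trans v h s a s' = T_h(s'|s,a) for h in 1..H-1, obsv v h s ob = Z_h(ob|s) for h in 1..H.\<close>
record ('s, 'a, 'o) pvec =
  init  :: "'s \<Rightarrow> real"
  trans :: "nat \<Rightarrow> 's \<Rightarrow> 'a \<Rightarrow> 's \<Rightarrow> real"
  obsv  :: "nat \<Rightarrow> 's \<Rightarrow> 'o \<Rightarrow> real"

text \<open>A vector is a genuine parameter vector iff all blocks are probability distributions;
  coordinates outside the index ranges are not part of the vector and are fixed to 0.\<close>
definition valid_pvec :: "nat \<Rightarrow> ('s::finite, 'a::finite, 'o::finite) pvec \<Rightarrow> bool" where
  "valid_pvec H v \<longleftrightarrow>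
     (\<forall>s. 0 \<le> init v s) \<and> (\<Sum>s\<in>UNIV. init v s) = 1 \<and>
     (\<forall>h s a. h \<in> {1..<H} \<longrightarrow> (\<forall>s'. 0 \<le> trans v h s a s') \<and> (\<Sum>s'\<in>UNIV. trans v h s a s') = 1) \<and>
     (\<forall>h s a s'. h \<notin> {1..<H} \<longrightarrow> trans v h s a s' = 0) \<and>
     (\<forall>h s. h \<in> {1..H} \<longrightarrow> (\<forall>ob. 0 \<le> obsv v h s ob) \<and> (\<Sum>ob\<in>UNIV. obsv v h s ob) = 1) \<and>
     (\<forall>h s ob. h \<notin> {1..H} \<longrightarrow> obsv v h s ob = 0)"

text \<open>Trajectories: lists of H (observation, action) pairs; tau ! i = (o_{i+1}, a_{i+1}).\<close>
definition traj_set :: "nat \<Rightarrow> ('o \<times> 'a) list set" where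
  "traj_set H = {tau. length tau = H}"

text \<open>Deterministic policy: pi hist ob, where hist = tau_{h-1} (a list of length h-1).\<close>
type_synonym ('o, 'a) policy = "('o \<times> 'a) list \<Rightarrow> 'o \<Rightarrow> 'a"

definition pr_minus :: "nat \<Rightarrow> ('s::finite, 'a, 'o) pvec \<Rightarrow> ('o \<times> 'a) list \<Rightarrow> real" where
  "pr_minus H v tau =
     (\<Sum>ss\<in>{ss::'s list. length ss = H}.
        init v (ss ! 0) * obsv v H (ss ! (H - 1)) (fst (tau ! (H - 1))) *
        (\<Prod>i<H - 1. obsv v (Suc i) (ss ! i) (fst (tau ! i)) *
                     trans v (Suc i) (ss ! i) (snd (tau ! i)) (ss ! Suc i)))"

definition pol_prob :: "nat \<Rightarrow> ('o, 'a) policy \<Rightarrow> ('o \<times> 'a) list \<Rightarrow> real" where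
  "pol_prob H pol tau = (\<Prod>i<H. if pol (take i tau) (fst (tau ! i)) = snd (tau ! i) then 1 else 0)"

definition pr_pi :: "nat \<Rightarrow> ('s::finite, 'a, 'o) pvec \<Rightarrow> ('o, 'a) policy \<Rightarrow> ('o \<times> 'a) list \<Rightarrow> real" where
  "pr_pi H v pol tau = pol_prob H pol tau * pr_minus H v tau"

definition value_fn :: "nat \<Rightarrow> (nat \<Rightarrow> 'o \<Rightarrow> 'a \<Rightarrow> real) \<Rightarrow> ('s::finite, 'a, 'o) pvec \<Rightarrow> ('o, 'a) policy \<Rightarrow> real" where
  "value_fn H r v pol =
     (\<Sum>tau\<in>traj_set H. pr_pi H v pol tau * (\<Sum>i<H. r (Suc i) (fst (tau ! i)) (snd (tau ! i))))"

definition opt_value :: "nat \<Rightarrow> (nat \<Rightarrow> 'o \<Rightarrow> 'a \<Rightarrow> real) \<Rightarrow> ('s::finite, 'a, 'o) pvec \<Rightarrow> real" where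
  "opt_value H r v = (SUP pol. value_fn H r v pol)"

definition tv_dist :: "nat \<Rightarrow> (('o \<times> 'a) list \<Rightarrow> real) \<Rightarrow> (('o \<times> 'a) list \<Rightarrow> real) \<Rightarrow> real" where
  "tv_dist H P Q = Max {\<bar>\<Sum>tau\<in>A. P tau - Q tau\<bar> | A. A \<subseteq> traj_set H}"

text \<open>A policy only matters through its values on histories of length < H; we use canonical
  representatives (values on longer histories fixed) so that the policy set is finite.\<close>
definition canon :: "nat \<Rightarrow> ('o, 'a) policy \<Rightarrow> ('o, 'a) policy" where
  "canon H pol = (\<lambda>hs ob. if length hs < H then pol hs ob else undefined)"

definition Pi_c :: "nat \<Rightarrow> ('o, 'a) policy set" where
  "Pi_c H = range (canon H)"

text \<open>Data of K episodes: list of (policy, trajectory); D_k = take (k-1) hs.\<close>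
definition hist_set :: "nat \<Rightarrow> nat \<Rightarrow> (('o, 'a) policy \<times> ('o \<times> 'a) list) list set" where
  "hist_set H K = {hs. length hs = K \<and> set hs \<subseteq> Pi_c H \<times> traj_set H}"

text \<open>A learning algorithm phi: phi D pol = probability of playing (the class of) pol given data D.
  Expectation over theta^* ~ prior, the algorithm's randomness and the trajectories.\<close>
definition joint_exp ::
  "nat \<Rightarrow> 'p measure \<Rightarrow> ('p \<Rightarrow> ('s::finite, 'a, 'o) pvec) \<Rightarrow>
   ((('o, 'a) policy \<times> ('o \<times> 'a) list) list \<Rightarrow> ('o, 'a) policy \<Rightarrow> real) \<Rightarrow> nat \<Rightarrow>
   ('p \<Rightarrow> (('o, 'a) policy \<times> ('o \<times> 'a) list) list \<Rightarrow> real) \<Rightarrow> real" where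
  "joint_exp H nu1 par phi K F =
     (\<integral>th. (\<Sum>hs\<in>hist_set H K.
        (\<Prod>k<K. phi (take k hs) (fst (hs ! k)) * pr_pi H (par th) (fst (hs ! k)) (snd (hs ! k))) *
        F th hs) \<partial>nu1)"

definition breg ::
  "nat \<Rightarrow> (nat \<Rightarrow> 'o \<Rightarrow> 'a \<Rightarrow> real) \<Rightarrow> 'p measure \<Rightarrow> ('p \<Rightarrow> ('s::finite, 'a, 'o) pvec) \<Rightarrow>
   ((('o, 'a) policy \<times> ('o \<times> 'a) list) list \<Rightarrow> ('o, 'a) policy \<Rightarrow> real) \<Rightarrow> nat \<Rightarrow> real" where
  "breg H r nu1 par phi K =
     joint_exp H nu1 par phi K
       (\<lambda>th hs. \<Sum>k<K. opt_value H r (par th) - value_fn H r (par th) (fst (hs ! k)))"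

definition posterior ::
  "nat \<Rightarrow> 'p measure \<Rightarrow> ('p \<Rightarrow> ('s::finite, 'a, 'o) pvec) \<Rightarrow>
   (('o, 'a) policy \<times> ('o \<times> 'a) list) list \<Rightarrow> 'p measure" where
  "posterior H nu1 par D =
     fold (\<lambda>(pol, tau) nu. density nu
             (\<lambda>th. ennreal (pr_pi H (par th) pol tau / (\<integral>th'. pr_pi H (par th') pol tau \<partial>nu)))) D nu1"

text \<open>PS4POMDPs: sample theta~ ~ nu^k, play planner(theta~) (an exact maximiser of V).\<close>
definition ps_alg ::
  "nat \<Rightarrow> 'p measure \<Rightarrow> ('p \<Rightarrow> ('s::finite, 'a, 'o) pvec) \<Rightarrow> ('p \<Rightarrow> ('o, 'a) policy) \<Rightarrow>
   (('o, 'a) policy \<times> ('o \<times> 'a) list) list \<Rightarrow> ('o, 'a) policy \<Rightarrow> real" where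
  "ps_alg H nu1 par planner D pol =
     measure (posterior H nu1 par D) {th \<in> space nu1. canon H (planner th) = pol}"

text \<open>Log-likelihood with log 0 = -infinity.\<close>
definition loglik :: "nat \<Rightarrow> ('s::finite, 'a, 'o) pvec \<Rightarrow> (('o, 'a) policy \<times> ('o \<times> 'a) list) list \<Rightarrow> ereal" where
  "loglik H v D =
     (if (\<forall>(pol, tau)\<in>set D. 0 < pr_pi H v pol tau)
      then ereal (\<Sum>(pol, tau)\<leftarrow>D. ln (pr_pi H v pol tau)) else -\<infinity>)"

definition conf_set ::
  "nat \<Rightarrow> nat \<Rightarrow> ('s::finite, 'a, 'o) pvec set \<Rightarrow> (('o, 'a) policy \<times> ('o \<times> 'a) list) list \<Rightarrow>
   ('s, 'a, 'o) pvec set" where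
  "conf_set H K Tb D =
     {v \<in> Tb. Max ((\<lambda>w. loglik H w D) ` Tb) - ereal (ln (real K * real (card Tb))) - 1 \<le> loglik H v D}"

end

theory Submission
  imports Defs
begin


lemma lists_Suc_eq:
  "{xs. length xs = Suc n \<and> set xs \<subseteq> A} = (\<lambda>(xs,x). xs@[x]) ` ({xs. length xs = n \<and> set xs \<subseteq> A} \<times> A)"
proof (rule set_eqI, rule iffI)
  fix ys assume ys: "ys \<in> {xs. length xs = Suc n \<and> set xs \<subseteq> A}"
  then obtain zs z where yz: "ys = zs @ [z]" using ys by (cases ys rule: rev_cases) auto
  show "ys \<in> (\<lambda>(xs,x). xs@[x]) ` ({xs. length xs = n \<and> set xs \<subseteq> A} \<times> A)"
    using ys yz by (intro image_eqI[of _ _ "(zs, z)"]) auto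
qed auto

lemma lists_Suc_inj: "inj_on (\<lambda>(xs,x). xs@[x]) X"
  by (auto simp: inj_on_def)

lemma sum_lists_Suc:
  "(\<Sum>xs\<in>{xs. length xs = Suc n \<and> set xs \<subseteq> A}. f xs) = (\<Sum>xs\<in>{xs. length xs = n \<and> set xs \<subseteq> A}. \<Sum>x\<in>A. f (xs@[x]))"
proof -
  have "(\<Sum>xs\<in>{xs. length xs = Suc n \<and> set xs \<subseteq> A}. f xs) = (\<Sum>(xs,x)\<in>{xs. length xs = n \<and> set xs \<subseteq> A} \<times> A. f (xs @ [x]))"
    unfolding lists_Suc_eq by (subst sum.reindex[OF lists_Suc_inj]) (simp add: o_def case_prod_unfold)
  also have "\<dots> = (\<Sum>xs\<in>{xs. length xs = n \<and> set xs \<subseteq> A}. \<Sum>x\<in>A. f (xs@[x]))"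
    by (rule sum.cartesian_product[symmetric])
  finally show ?thesis .
qed

lemma sum_lists_Suc_UNIV:
  "(\<Sum>xs\<in>{xs::'a list. length xs = Suc n}. f xs) = (\<Sum>xs\<in>{xs. length xs = n}. \<Sum>x\<in>UNIV. f (xs@[x]))"
  using sum_lists_Suc[where n=n and A=UNIV and f=f] by simp

lemma valid_nonneg:
  assumes "valid_pvec H v"
  shows "0 \<le> init v s" "0 \<le> trans v h s a s'" "0 \<le> obsv v h s ob"
proof -
  show "0 \<le> init v s" using assms unfolding valid_pvec_def by auto
  show "0 \<le> trans v h s a s'" using assms unfolding valid_pvec_def by (cases "h \<in> {1..<H}") auto
  show "0 \<le> obsv v h s ob" using assms unfolding valid_pvec_def by (cases "h \<in> {1..H}") auto
qed

lemma sum_ind: "(\<Sum>a\<in>(UNIV::'a::finite set). (if p = a then 1 else 0) * (c::real)) = c"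
proof -
  have "(\<Sum>a\<in>(UNIV::'a set). (if p = a then 1 else 0) * c) = (\<Sum>a\<in>UNIV. if p = a then c else 0)"
    by (intro sum.cong) auto
  then show ?thesis by simp
qed

definition Qf :: "nat \<Rightarrow> ('s::finite, 'a, 'o) pvec \<Rightarrow> ('o \<times> 'a) list \<Rightarrow> 's list \<Rightarrow> real" where
  "Qf n v tau ss = init v (ss ! 0) * obsv v n (ss ! (n - 1)) (fst (tau ! (n - 1))) *
        (\<Prod>i<n - 1. obsv v (Suc i) (ss ! i) (fst (tau ! i)) *
                     trans v (Suc i) (ss ! i) (snd (tau ! i)) (ss ! Suc i))"

lemma pr_minus_Qf: "pr_minus H v tau = (\<Sum>ss\<in>{ss. length ss = H}. Qf H v tau ss)"
  unfolding pr_minus_def Qf_def ..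

lemma pol_prob_snoc:
  assumes "length tau = n"
  shows "pol_prob (Suc n) pol (tau @ [x]) = pol_prob n pol tau * (if pol tau (fst x) = snd x then 1 else 0)"
proof -
  have "pol_prob (Suc n) pol (tau @ [x]) = (\<Prod>i<n. if pol (take i (tau@[x])) (fst ((tau@[x]) ! i)) = snd ((tau@[x]) ! i) then 1 else 0) *
     (if pol (take n (tau@[x])) (fst ((tau@[x]) ! n)) = snd ((tau@[x]) ! n) then 1 else 0)"
    unfolding pol_prob_def by simp
  also have "(\<Prod>i<n. if pol (take i (tau@[x])) (fst ((tau@[x]) ! i)) = snd ((tau@[x]) ! i) then (1::real) else 0)
     = pol_prob n pol tau"
    unfolding pol_prob_def using assms by (intro prod.cong) (auto simp: nth_append)
  finally show ?thesis using assms by (simp add: nth_append)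
qed

lemma Qf_snoc:
  assumes "length tau = n" "length ss = n" "1 \<le> n"
  shows "Qf (Suc n) v (tau @ [x]) (ss @ [s']) = Qf n v tau ss * trans v n (ss ! (n-1)) (snd (tau ! (n-1))) s' * obsv v (Suc n) s' (fst x)"
proof -
  have e: "n = Suc (n - 1)" using assms by simp
  have p: "(\<Prod>i<n. obsv v (Suc i) ((ss@[s']) ! i) (fst ((tau@[x]) ! i)) * trans v (Suc i) ((ss@[s']) ! i) (snd ((tau@[x]) ! i)) ((ss@[s']) ! Suc i))
      = (\<Prod>i<n-1. obsv v (Suc i) (ss ! i) (fst (tau ! i)) * trans v (Suc i) (ss ! i) (snd (tau ! i)) (ss ! Suc i)) *
        (obsv v n (ss ! (n-1)) (fst (tau ! (n-1))) * trans v n (ss ! (n-1)) (snd (tau ! (n-1))) s')"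
    apply (subst e) apply (subst prod.lessThan_Suc)
    using assms by (auto simp: nth_append intro!: prod.cong)
  show ?thesis unfolding Qf_def using assms p by (simp add: nth_append)
qed

lemma total_Qf:
  assumes v: "valid_pvec H v" and n: "1 \<le> n" "n \<le> H"
  shows "(\<Sum>tau\<in>{tau::('o::finite \<times> 'a::finite) list. length tau = n}. pol_prob n pol tau * (\<Sum>ss\<in>{ss::'s::finite list. length ss = n}. Qf n v tau ss)) = 1"
  using n
proof (induction n rule: dec_induct)
  case base
  have L1: "\<And>f. (\<Sum>xs\<in>{xs::'b list. length xs = 1}. f xs) = (\<Sum>x\<in>UNIV. f [x])" for dummy :: 'b
    using sum_lists_Suc_UNIV[where n=0] by simp
  have i: "(\<Sum>s\<in>UNIV. init v s) = 1" using v unfolding valid_pvec_def by auto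
  have z: "\<And>s. (\<Sum>ob\<in>UNIV. obsv v 1 s ob) = 1" using v assms unfolding valid_pvec_def by auto
  have "(\<Sum>tau\<in>{tau::('o \<times> 'a) list. length tau = 1}. pol_prob 1 pol tau * (\<Sum>ss\<in>{ss::'s list. length ss = 1}. Qf 1 v tau ss))
     = (\<Sum>x\<in>UNIV. (if pol [] (fst x) = snd x then 1 else 0) * (\<Sum>s\<in>UNIV. init v s * obsv v 1 s (fst x)))"
    by (simp only: L1) (simp add: pol_prob_def Qf_def)
  also have "\<dots> = (\<Sum>ob\<in>UNIV. \<Sum>a\<in>UNIV. (if pol [] ob = a then 1 else 0) * (\<Sum>s\<in>UNIV. init v s * obsv v 1 s ob))"
    unfolding UNIV_Times_UNIV[symmetric] sum.cartesian_product by (simp add: case_prod_beta)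
  also have "\<dots> = (\<Sum>ob\<in>UNIV. \<Sum>s\<in>UNIV. init v s * obsv v 1 s ob)"
    by (simp only: sum_ind)
  also have "\<dots> = (\<Sum>s\<in>UNIV. init v s * (\<Sum>ob\<in>UNIV. obsv v 1 s ob))"
    by (subst sum.swap) (simp add: sum_distrib_left)
  also have "\<dots> = 1" using i z by simp
  finally show ?case .
next
  case (step n)
  have T: "\<And>s a. (\<Sum>s'\<in>UNIV. trans v n s a s') = 1" using v step unfolding valid_pvec_def by auto
  have Z: "\<And>s. (\<Sum>ob\<in>UNIV. obsv v (Suc n) s ob) = 1" using v step unfolding valid_pvec_def by auto
  have inner: "(\<Sum>x\<in>UNIV. (if pol tau (fst x) = snd x then 1 else 0) *
          (\<Sum>ss\<in>{ss::'s list. length ss = n}. \<Sum>s'\<in>UNIV. Qf n v tau ss * trans v n (ss ! (n-1)) (snd (tau ! (n-1))) s' * obsv v (Suc n) s' (fst x)))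
        = (\<Sum>ss\<in>{ss::'s list. length ss = n}. Qf n v tau ss)" for tau :: "('o \<times> 'a) list"
  proof -
    have "(\<Sum>x\<in>UNIV. (if pol tau (fst x) = snd x then 1 else 0) *
          (\<Sum>ss\<in>{ss::'s list. length ss = n}. \<Sum>s'\<in>UNIV. Qf n v tau ss * trans v n (ss ! (n-1)) (snd (tau ! (n-1))) s' * obsv v (Suc n) s' (fst x)))
       = (\<Sum>ob\<in>UNIV. \<Sum>a\<in>UNIV. (if pol tau ob = a then 1 else 0) *
          (\<Sum>ss\<in>{ss::'s list. length ss = n}. \<Sum>s'\<in>UNIV. Qf n v tau ss * trans v n (ss ! (n-1)) (snd (tau ! (n-1))) s' * obsv v (Suc n) s' ob))"
      unfolding UNIV_Times_UNIV[symmetric] sum.cartesian_product by (simp add: case_prod_beta)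
    also have "\<dots> = (\<Sum>ob\<in>UNIV. (\<Sum>ss\<in>{ss::'s list. length ss = n}. \<Sum>s'\<in>UNIV. Qf n v tau ss * trans v n (ss ! (n-1)) (snd (tau ! (n-1))) s' * obsv v (Suc n) s' ob))"
      by (simp only: sum_ind)
    also have "\<dots> = (\<Sum>ss\<in>{ss::'s list. length ss = n}. \<Sum>s'\<in>UNIV. Qf n v tau ss * trans v n (ss ! (n-1)) (snd (tau ! (n-1))) s' * (\<Sum>ob\<in>UNIV. obsv v (Suc n) s' ob))"
    proof -
      define F where "F ss s' ob = Qf n v tau ss * trans v n (ss ! (n-1)) (snd (tau ! (n-1))) s' * obsv v (Suc n) s' ob" for ss s' ob
      have "(\<Sum>ob\<in>UNIV. \<Sum>ss\<in>{ss::'s list. length ss = n}. \<Sum>s'\<in>UNIV. F ss s' ob)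
          = (\<Sum>ss\<in>{ss::'s list. length ss = n}. \<Sum>ob\<in>UNIV. \<Sum>s'\<in>UNIV. F ss s' ob)"
        by (rule sum.swap)
      also have "\<dots> = (\<Sum>ss\<in>{ss::'s list. length ss = n}. \<Sum>s'\<in>UNIV. \<Sum>ob\<in>UNIV. F ss s' ob)"
        by (intro sum.cong refl) (rule sum.swap)
      finally show ?thesis unfolding F_def by (simp add: sum_distrib_left)
    qed
    also have "\<dots> = (\<Sum>ss\<in>{ss::'s list. length ss = n}. Qf n v tau ss * (\<Sum>s'\<in>UNIV. trans v n (ss ! (n-1)) (snd (tau ! (n-1))) s'))"
      by (simp add: Z sum_distrib_left)
    also have "\<dots> = (\<Sum>ss\<in>{ss::'s list. length ss = n}. Qf n v tau ss)" by (simp add: T)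
    finally show ?thesis .
  qed
  have "(\<Sum>tau\<in>{tau::('o \<times> 'a) list. length tau = Suc n}. pol_prob (Suc n) pol tau * (\<Sum>ss\<in>{ss::'s list. length ss = Suc n}. Qf (Suc n) v tau ss))
     = (\<Sum>tau\<in>{tau::('o \<times> 'a) list. length tau = n}. \<Sum>x\<in>UNIV. pol_prob (Suc n) pol (tau@[x]) * (\<Sum>ss\<in>{ss::'s list. length ss = n}. \<Sum>s'\<in>UNIV. Qf (Suc n) v (tau@[x]) (ss@[s'])))"
    by (simp only: sum_lists_Suc_UNIV)
  also have "\<dots> = (\<Sum>tau\<in>{tau::('o \<times> 'a) list. length tau = n}. \<Sum>x\<in>UNIV. pol_prob n pol tau * ((if pol tau (fst x) = snd x then 1 else 0) *
          (\<Sum>ss\<in>{ss::'s list. length ss = n}. \<Sum>s'\<in>UNIV. Qf n v tau ss * trans v n (ss ! (n-1)) (snd (tau ! (n-1))) s' * obsv v (Suc n) s' (fst x))))"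
    using step(1) by (intro sum.cong refl) (simp add: pol_prob_snoc Qf_snoc)
  also have "\<dots> = (\<Sum>tau\<in>{tau::('o \<times> 'a) list. length tau = n}. pol_prob n pol tau * (\<Sum>ss\<in>{ss::'s list. length ss = n}. Qf n v tau ss))"
    by (simp only: sum_distrib_left[symmetric] inner)
  also have "\<dots> = 1" by (rule step.IH) (use step in auto)
  finally show ?case .
qed

lemma total_pr_pi:
  assumes "valid_pvec H v" "1 \<le> H"
  shows "(\<Sum>tau\<in>traj_set H. pr_pi H v pol tau) = 1"
  using total_Qf[OF assms(1) assms(2) order_refl, of pol]
  unfolding traj_set_def pr_pi_def pr_minus_Qf by simp

lemma pol_prob_nonneg: "0 \<le> pol_prob n pol tau" "pol_prob n pol tau \<le> 1"
  unfolding pol_prob_def by (auto intro!: prod_nonneg prod_le_1)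

lemma pr_minus_nonneg: "valid_pvec H v \<Longrightarrow> 0 \<le> pr_minus H v tau"
  unfolding pr_minus_def by (intro sum_nonneg mult_nonneg_nonneg prod_nonneg) (auto simp: valid_nonneg)

lemma pr_pi_nonneg: "valid_pvec H v \<Longrightarrow> 0 \<le> pr_pi H v pol tau"
  unfolding pr_pi_def by (simp add: pr_minus_nonneg pol_prob_nonneg)

lemma finite_traj_set: "finite (traj_set H :: ('o::finite \<times> 'a::finite) list set)"
  unfolding traj_set_def using finite_lists_length_eq[of "UNIV :: ('o \<times> 'a) set" H] by simp

lemma pr_pi_le1:
  assumes "valid_pvec H v" "1 \<le> H" "tau \<in> traj_set H"
  shows "pr_pi H v pol tau \<le> 1"
proof -
  have "pr_pi H v pol tau \<le> (\<Sum>tau\<in>traj_set H. pr_pi H v pol tau)"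
    by (rule member_le_sum) (use assms finite_traj_set pr_pi_nonneg in auto)
  then show ?thesis using total_pr_pi[OF assms(1,2)] by simp
qed

lemma pol_prob_canon: "pol_prob H (canon H pol) tau = pol_prob H pol tau"
  unfolding pol_prob_def canon_def by (intro prod.cong refl) auto

lemma pr_pi_canon: "pr_pi H v (canon H pol) = pr_pi H v pol"
  unfolding pr_pi_def by (simp add: pol_prob_canon)

lemma value_canon: "value_fn H r v (canon H pol) = value_fn H r v pol"
  unfolding value_fn_def by (simp add: pr_pi_canon)


lemma finite_Pi_c: "finite (Pi_c H :: ('o::finite, 'a::finite) policy set)"
proof -
  define Hs where "Hs = {hs::('o \<times> 'a) list. set hs \<subseteq> UNIV \<and> length hs \<le> H}"
  have fHs: "finite Hs" unfolding Hs_def by (rule finite_lists_length_le) simp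
  define g where "g pol = (\<lambda>p\<in>Hs \<times> (UNIV::'o set). pol (fst p) (snd p))" for pol :: "('o, 'a) policy"
  have "g ` Pi_c H \<subseteq> PiE (Hs \<times> UNIV) (\<lambda>_. UNIV)" by (auto simp: g_def restrict_PiE_iff split: if_splits)
  moreover have "finite (PiE (Hs \<times> (UNIV::'o set)) (\<lambda>_. (UNIV::'a set)))"
    by (intro finite_PiE finite_cartesian_product fHs) auto
  ultimately have f: "finite (g ` Pi_c H)" by (rule finite_subset)
  have "inj_on g (Pi_c H)"
  proof (rule inj_onI)
    fix p q assume p: "p \<in> Pi_c H" and q: "q \<in> Pi_c H" and e: "g p = g q"
    obtain p0 where p0: "p = canon H p0" using p unfolding Pi_c_def by auto
    obtain q0 where q0: "q = canon H q0" using q unfolding Pi_c_def by auto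
    show "p = q"
    proof (rule ext, rule ext)
      fix hs ob
      show "p hs ob = q hs ob"
      proof (cases "length hs < H")
        case True
        then have "(hs, ob) \<in> Hs \<times> UNIV" unfolding Hs_def by auto
        then have "g p (hs, ob) = g q (hs, ob)" using e by simp
        then show ?thesis using \<open>(hs, ob) \<in> Hs \<times> UNIV\<close> unfolding g_def by simp
      next
        case False
        then show ?thesis unfolding p0 q0 canon_def by simp
      qed
    qed
  qed
  then show ?thesis using f by (rule finite_imageD[rotated])
qed

lemma finite_hist: "finite (hist_set H n :: (('o::finite, 'a::finite) policy \<times> ('o \<times> 'a) list) list set)"
proof -
  have "finite {xs. set xs \<subseteq> (Pi_c H :: ('o, 'a) policy set) \<times> (traj_set H :: ('o \<times> 'a) list set) \<and> length xs = n}"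
    by (rule finite_lists_length_eq) (rule finite_cartesian_product[OF finite_Pi_c finite_traj_set])
  then show ?thesis unfolding hist_set_def by (simp add: conj_commute)
qed

lemma hist_Suc_sum: "(\<Sum>hs\<in>hist_set H (Suc n). f hs) = (\<Sum>hs\<in>hist_set H n. \<Sum>x\<in>Pi_c H \<times> traj_set H. f (hs @ [x]))"
  unfolding hist_set_def by (rule sum_lists_Suc)

lemma hist_0: "hist_set H 0 = {[]}"
  unfolding hist_set_def by auto

lemma canon_in_Pi_c: "canon H pol \<in> Pi_c H"
  unfolding Pi_c_def by auto

lemma valid_le1:
  assumes "valid_pvec H v"
  shows "init v s \<le> 1" "trans v h s a s' \<le> 1" "obsv v h s ob \<le> 1"
proof -
  have "init v s \<le> (\<Sum>s\<in>UNIV. init v s)" by (rule member_le_sum) (auto simp: valid_nonneg[OF assms])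
  then show "init v s \<le> 1" using assms unfolding valid_pvec_def by auto
  show "trans v h s a s' \<le> 1"
  proof (cases "h \<in> {1..<H}")
    case True
    have "trans v h s a s' \<le> (\<Sum>s'\<in>UNIV. trans v h s a s')" by (rule member_le_sum) (auto simp: valid_nonneg[OF assms])
    then show ?thesis using assms True unfolding valid_pvec_def by auto
  next
    case False then show ?thesis using assms unfolding valid_pvec_def by auto
  qed
  show "obsv v h s ob \<le> 1"
  proof (cases "h \<in> {1..H}")
    case True
    have "obsv v h s ob \<le> (\<Sum>ob\<in>UNIV. obsv v h s ob)" by (rule member_le_sum) (auto simp: valid_nonneg[OF assms])
    then show ?thesis using assms True unfolding valid_pvec_def by auto
  next
    case False then show ?thesis using assms unfolding valid_pvec_def by auto
  qed
qed

lemma pr_pi_bound: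
  fixes v :: "('s::finite, 'a::finite, 'o::finite) pvec"
  assumes "valid_pvec H v"
  shows "pr_pi H v pol tau \<le> real (card {ss::'s::finite list. length ss = H})"
proof -
  have "pr_minus H v tau \<le> (\<Sum>ss\<in>{ss::'s list. length ss = H}. (1::real))"
    unfolding pr_minus_def
  proof (rule sum_mono)
    fix ss :: "'s list"
    have a: "0 \<le> (\<Prod>i<H - 1. obsv v (Suc i) (ss ! i) (fst (tau ! i)) * trans v (Suc i) (ss ! i) (snd (tau ! i)) (ss ! Suc i))"
      by (intro prod_nonneg mult_nonneg_nonneg) (auto simp: valid_nonneg[OF assms])
    have b: "(\<Prod>i<H - 1. obsv v (Suc i) (ss ! i) (fst (tau ! i)) * trans v (Suc i) (ss ! i) (snd (tau ! i)) (ss ! Suc i)) \<le> 1"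
      by (intro prod_le_1 conjI mult_nonneg_nonneg mult_le_one) (auto simp: valid_nonneg[OF assms] valid_le1[OF assms])
    have c: "0 \<le> init v (ss ! 0) * obsv v H (ss ! (H - 1)) (fst (tau ! (H - 1)))"
      by (intro mult_nonneg_nonneg) (auto simp: valid_nonneg[OF assms])
    have d: "init v (ss ! 0) * obsv v H (ss ! (H - 1)) (fst (tau ! (H - 1))) \<le> 1"
      by (intro mult_le_one) (auto simp: valid_nonneg[OF assms] valid_le1[OF assms])
    show "init v (ss ! 0) * obsv v H (ss ! (H - 1)) (fst (tau ! (H - 1))) *
        (\<Prod>i<H - 1. obsv v (Suc i) (ss ! i) (fst (tau ! i)) * trans v (Suc i) (ss ! i) (snd (tau ! i)) (ss ! Suc i)) \<le> 1"
      by (rule mult_le_one[OF d a b])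
  qed
  then have "pr_minus H v tau \<le> real (card {ss::'s::finite list. length ss = H})" by simp
  moreover have "pol_prob H pol tau * pr_minus H v tau \<le> pr_minus H v tau"
    using pol_prob_nonneg[of H pol tau] pr_minus_nonneg[OF assms, of tau]
    by (simp add: mult_left_le_one_le)
  ultimately show ?thesis unfolding pr_pi_def by linarith
qed


locale setting =
  fixes H K :: nat
    and eps :: real
    and r :: "nat \<Rightarrow> 'o::finite \<Rightarrow> 'a::finite \<Rightarrow> real"
    and nu1 :: "'p measure"
    and par :: "'p \<Rightarrow> ('s::finite, 'a, 'o) pvec"
    and planner :: "'p \<Rightarrow> ('o, 'a) policy"
    and Tb :: "('s, 'a, 'o) pvec set"
    and iota :: "'p \<Rightarrow> ('s, 'a, 'o) pvec"
  assumes H: "1 \<le> H" and K: "1 \<le> K"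
    and eps: "eps = 1 / (2 * real H * real K)"
    and rew: "\<forall>h\<in>{1..H}. \<forall>ob a. 0 \<le> r h ob a \<and> r h ob a \<le> 1"
    and prior: "prob_space nu1"
    and par_valid: "\<forall>th\<in>space nu1. valid_pvec H (par th)"
    and par_meas_b: "\<forall>s. (\<lambda>th. init (par th) s) \<in> borel_measurable nu1"
    and par_meas_T: "\<forall>h\<in>{1..<H}. \<forall>s a s'. (\<lambda>th. trans (par th) h s a s') \<in> borel_measurable nu1"
    and par_meas_Z: "\<forall>h\<in>{1..H}. \<forall>s ob. (\<lambda>th. obsv (par th) h s ob) \<in> borel_measurable nu1"
    and planner_opt: "\<forall>th\<in>space nu1. \<forall>pol. value_fn H r (par th) pol \<le> value_fn H r (par th) (planner th)"
    and planner_meas: "\<forall>pol. {th \<in> space nu1. canon H (planner th) = pol} \<in> sets nu1"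
    and Tb_fin: "finite Tb"
    and Tb_valid: "\<forall>v\<in>Tb. valid_pvec H v"
    and iota_onto: "iota ` space nu1 = Tb"
    and iota_meas: "\<forall>v\<in>Tb. {th \<in> space nu1. iota th = v} \<in> sets nu1"
    and iota_tv: "\<forall>th\<in>space nu1. \<forall>pol.
                    tv_dist H (pr_pi H (iota th) pol) (pr_pi H (par th) pol) \<le> 2 * real H * eps"
    and iota_lb: "\<forall>th\<in>space nu1. \<forall>tau\<in>traj_set H.
                    pr_minus H (par th) tau / (1 + eps) ^ (2 * H) \<le> pr_minus H (iota th) tau"
begin

sublocale prob_space nu1 by (rule prior)

definition bnd :: "('p \<Rightarrow> real) \<Rightarrow> bool" where
  "bnd f \<longleftrightarrow> f \<in> borel_measurable nu1 \<and> (\<exists>B. \<forall>x\<in>space nu1. \<bar>f x\<bar> \<le> B)"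

lemma bnd_integrable: "bnd f \<Longrightarrow> integrable nu1 f"
  unfolding bnd_def by (auto intro!: integrable_const_bound AE_I2)

lemma bnd_meas: "bnd f \<Longrightarrow> f \<in> borel_measurable nu1"
  unfolding bnd_def by auto

lemma bnd_const[simp]: "bnd (\<lambda>x. c)"
  unfolding bnd_def by auto

lemma bnd_add: "bnd f \<Longrightarrow> bnd g \<Longrightarrow> bnd (\<lambda>x. f x + g x)"
  unfolding bnd_def
proof (elim conjE exE, intro conjI)
  fix B1 B2 assume "\<forall>x\<in>space nu1. \<bar>f x\<bar> \<le> B1" "\<forall>x\<in>space nu1. \<bar>g x\<bar> \<le> B2"
  then show "\<exists>B. \<forall>x\<in>space nu1. \<bar>f x + g x\<bar> \<le> B"
    by (intro exI[of _ "B1 + B2"]) (auto intro: order.trans[OF abs_triangle_ineq] add_mono)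
qed auto

lemma bnd_uminus: "bnd f \<Longrightarrow> bnd (\<lambda>x. - f x)"
  unfolding bnd_def by auto

lemma bnd_diff: "bnd f \<Longrightarrow> bnd g \<Longrightarrow> bnd (\<lambda>x. f x - g x)"
  using bnd_add[of f "\<lambda>x. - g x"] bnd_uminus[of g] by simp

lemma bnd_mult: "bnd f \<Longrightarrow> bnd g \<Longrightarrow> bnd (\<lambda>x. f x * g x)"
  unfolding bnd_def
proof (elim conjE exE, intro conjI)
  fix B1 B2 assume b1: "\<forall>x\<in>space nu1. \<bar>f x\<bar> \<le> B1" and b2: "\<forall>x\<in>space nu1. \<bar>g x\<bar> \<le> B2"
  show "\<exists>B. \<forall>x\<in>space nu1. \<bar>f x * g x\<bar> \<le> B"
  proof (intro exI[of _ "max B1 0 * max B2 0"] ballI)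
    fix x assume "x \<in> space nu1"
    then have "\<bar>f x\<bar> \<le> max B1 0" "\<bar>g x\<bar> \<le> max B2 0" using b1 b2 by force+
    then show "\<bar>f x * g x\<bar> \<le> max B1 0 * max B2 0" unfolding abs_mult by (intro mult_mono) auto
  qed
qed auto

lemma bnd_sum: "(\<And>i. i \<in> I \<Longrightarrow> bnd (f i)) \<Longrightarrow> bnd (\<lambda>x. \<Sum>i\<in>I. f i x)"
proof (induction I rule: infinite_finite_induct)
  case (insert i I) then show ?case by (simp add: bnd_add)
qed auto

lemma bnd_prod: "(\<And>i. i \<in> I \<Longrightarrow> bnd (f i)) \<Longrightarrow> bnd (\<lambda>x. \<Prod>i\<in>I. f i x)"
proof (induction I rule: infinite_finite_induct)
  case (insert i I) then show ?case by (simp add: bnd_mult)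
qed auto

lemma bnd_ind: "A \<in> sets nu1 \<Longrightarrow> bnd (indicator A)"
  unfolding bnd_def by (auto intro!: exI[of _ 1] simp: indicator_def)

lemma bnd_cong: "(\<And>x. x \<in> space nu1 \<Longrightarrow> f x = g x) \<Longrightarrow> bnd f \<Longrightarrow> bnd g"
  unfolding bnd_def using measurable_cong[of nu1 f g] by auto

lemma valid_par: "th \<in> space nu1 \<Longrightarrow> valid_pvec H (par th)"
  using par_valid by auto

lemma meas_pr_minus: "(\<lambda>th. pr_minus H (par th) tau) \<in> borel_measurable nu1"
  unfolding pr_minus_def
proof (intro borel_measurable_sum borel_measurable_times borel_measurable_prod)
  fix ss :: "'s list" and i
  show "(\<lambda>th. init (par th) (ss ! 0)) \<in> borel_measurable nu1" using par_meas_b by auto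
  show "(\<lambda>th. obsv (par th) H (ss ! (H - 1)) (fst (tau ! (H - 1)))) \<in> borel_measurable nu1"
    using par_meas_Z H by auto
  assume i: "i \<in> {..<H - 1}"
  show "(\<lambda>th. obsv (par th) (Suc i) (ss ! i) (fst (tau ! i))) \<in> borel_measurable nu1"
    using par_meas_Z i by auto
  show "(\<lambda>th. trans (par th) (Suc i) (ss ! i) (snd (tau ! i)) (ss ! Suc i)) \<in> borel_measurable nu1"
    using par_meas_T i by auto
qed

lemma bnd_P: "bnd (\<lambda>th. pr_pi H (par th) pol tau)"
  unfolding bnd_def
proof (intro conjI exI ballI)
  show "(\<lambda>th. pr_pi H (par th) pol tau) \<in> borel_measurable nu1"
    unfolding pr_pi_def using meas_pr_minus by simp
  fix th assume "th \<in> space nu1"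
  then show "\<bar>pr_pi H (par th) pol tau\<bar> \<le> real (card {ss::'s list. length ss = H})"
    using pr_pi_bound[OF valid_par] pr_pi_nonneg[OF valid_par] by auto
qed

lemma P_nonneg: "th \<in> space nu1 \<Longrightarrow> 0 \<le> pr_pi H (par th) pol tau"
  using pr_pi_nonneg[OF valid_par] .

lemma P_total: "th \<in> space nu1 \<Longrightarrow> (\<Sum>tau\<in>traj_set H. pr_pi H (par th) pol tau) = 1"
  using total_pr_pi[OF valid_par H] .

definition L :: "'p \<Rightarrow> (('o, 'a) policy \<times> ('o \<times> 'a) list) list \<Rightarrow> real" where
  "L th D = (\<Prod>j<length D. pr_pi H (par th) (fst (D ! j)) (snd (D ! j)))"

definition Z :: "(('o, 'a) policy \<times> ('o \<times> 'a) list) list \<Rightarrow> real" where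
  "Z D = (\<integral>th. L th D \<partial>nu1)"

lemma bnd_L: "bnd (\<lambda>th. L th D)"
  unfolding L_def by (intro bnd_prod bnd_P)

lemma L_nonneg: "th \<in> space nu1 \<Longrightarrow> 0 \<le> L th D"
  unfolding L_def by (intro prod_nonneg) (auto simp: P_nonneg)

lemma L_Nil[simp]: "L th [] = 1"
  unfolding L_def by simp

lemma L_snoc: "L th (D @ [x]) = L th D * pr_pi H (par th) (fst x) (snd x)"
  unfolding L_def by (simp add: nth_append)

lemma Z_nonneg: "0 \<le> Z D"
  unfolding Z_def by (intro integral_nonneg_AE AE_I2 L_nonneg)

lemma Z_Nil: "Z [] = 1"
  unfolding Z_def by (simp add: prob_space)

lemma int_L_zero:
  assumes "Z D = 0" "bnd g"
  shows "(\<integral>th. L th D * g th \<partial>nu1) = 0"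
proof -
  obtain B where B: "\<forall>x\<in>space nu1. \<bar>g x\<bar> \<le> B" using assms(2) unfolding bnd_def by auto
  have i1: "integrable nu1 (\<lambda>th. L th D * g th)" by (intro bnd_integrable bnd_mult bnd_L assms(2))
  have i2: "integrable nu1 (\<lambda>th. L th D * B)" by (intro bnd_integrable bnd_mult bnd_L bnd_const)
  have i3: "integrable nu1 (\<lambda>th. L th D * (- B))" by (intro bnd_integrable bnd_mult bnd_L bnd_const)
  have a: "(\<integral>th. L th D * g th \<partial>nu1) \<le> (\<integral>th. L th D * B \<partial>nu1)"
    using B by (intro integral_mono i1 i2) (auto intro!: mult_left_mono L_nonneg)
  have b: "(\<integral>th. L th D * (- B) \<partial>nu1) \<le> (\<integral>th. L th D * g th \<partial>nu1)"
  proof (intro integral_mono i1 i3)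
    fix x assume x: "x \<in> space nu1"
    then have "- B \<le> g x" using B by force
    then show "L x D * - B \<le> L x D * g x" using L_nonneg[OF x] by (rule mult_left_mono)
  qed
  have c: "(\<integral>th. L th D * B \<partial>nu1) = Z D * B" unfolding Z_def by simp
  have d: "(\<integral>th. L th D * (- B) \<partial>nu1) = Z D * (- B)" unfolding Z_def by simp
  have z: "(\<integral>th. L th D \<partial>nu1) = 0" using assms(1) unfolding Z_def .
  from a z have "(\<integral>th. L th D * g th \<partial>nu1) \<le> 0" by simp
  moreover from b z have "0 \<le> (\<integral>th. L th D * g th \<partial>nu1)" by simp
  ultimately show ?thesis by linarith
qed

end


context setting begin

lemma posterior_eq: "posterior H nu1 par D = density nu1 (\<lambda>th. ennreal (L th D / Z D))"
proof (induction D rule: rev_induct)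
  case Nil
  have "posterior H nu1 par [] = nu1" unfolding posterior_def by simp
  also have "\<dots> = density nu1 (\<lambda>th. ennreal (L th [] / Z []))" by (simp add: Z_Nil density_1)
  finally show ?case .
next
  case (snoc x D)
  obtain pol tau where x: "x = (pol, tau)" by (cases x)
  define g where "g th = L th D / Z D" for th
  have Lm[measurable]: "(\<lambda>th. L th D) \<in> borel_measurable nu1" using bnd_meas[OF bnd_L] .
  have Lm'[measurable]: "(\<lambda>th. L th (D @ [x])) \<in> borel_measurable nu1" using bnd_meas[OF bnd_L] .
  have gm[measurable]: "g \<in> borel_measurable nu1" unfolding g_def by measurable
  have g0: "\<And>th. th \<in> space nu1 \<Longrightarrow> 0 \<le> g th" unfolding g_def by (auto intro!: divide_nonneg_nonneg L_nonneg Z_nonneg)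
  have Pm[measurable]: "(\<lambda>th. pr_pi H (par th) pol tau) \<in> borel_measurable nu1" using bnd_meas[OF bnd_P] .
  have post: "posterior H nu1 par (D @ [x]) = density (posterior H nu1 par D)
     (\<lambda>th. ennreal (pr_pi H (par th) pol tau / (\<integral>th'. pr_pi H (par th') pol tau \<partial>(posterior H nu1 par D))))"
    unfolding posterior_def x by simp
  have "(\<integral>th'. pr_pi H (par th') pol tau \<partial>(density nu1 (\<lambda>th. ennreal (g th)))) = (\<integral>th. g th * pr_pi H (par th) pol tau \<partial>nu1)"
    by (subst integral_density) (auto simp: g0)
  also have "\<dots> = (\<integral>th. L th (D @ [x]) \<partial>nu1) / Z D"
    unfolding g_def L_snoc x by (simp add: integral_divide_zero)
  finally have I: "(\<integral>th'. pr_pi H (par th') pol tau \<partial>(density nu1 (\<lambda>th. ennreal (g th)))) = Z (D @ [x]) / Z D"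
    unfolding Z_def .
  define c where "c = Z (D @ [x]) / Z D"
  have c0: "0 \<le> c" unfolding c_def by (intro divide_nonneg_nonneg Z_nonneg)
  have "posterior H nu1 par (D @ [x]) = density (density nu1 (\<lambda>th. ennreal (g th))) (\<lambda>th. ennreal (pr_pi H (par th) pol tau / c))"
    unfolding post snoc.IH I[unfolded g_def] c_def g_def ..
  also have "\<dots> = density nu1 (\<lambda>th. ennreal (g th) * ennreal (pr_pi H (par th) pol tau / c))"
    by (rule density_density_eq) measurable
  also have "\<dots> = density nu1 (\<lambda>th. ennreal (L th (D @ [x]) / Z (D @ [x])))"
  proof (rule density_cong)
    show "(\<lambda>th. ennreal (g th) * ennreal (pr_pi H (par th) pol tau / c)) \<in> borel_measurable nu1" by measurable
    show "(\<lambda>th. ennreal (L th (D @ [x]) / Z (D @ [x]))) \<in> borel_measurable nu1" by measurable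
    show "AE th in nu1. ennreal (g th) * ennreal (pr_pi H (par th) pol tau / c) = ennreal (L th (D @ [x]) / Z (D @ [x]))"
    proof (rule AE_I2)
      fix th assume th: "th \<in> space nu1"
      have "ennreal (g th) * ennreal (pr_pi H (par th) pol tau / c) = ennreal (g th * (pr_pi H (par th) pol tau / c))"
        using g0[OF th] c0 P_nonneg[OF th] by (intro ennreal_mult[symmetric] divide_nonneg_nonneg)
      also have "g th * (pr_pi H (par th) pol tau / c) = L th (D @ [x]) / Z (D @ [x])"
      proof (cases "Z D = 0")
        case True
        then have "Z (D @ [x]) = 0" unfolding Z_def L_snoc x
          using int_L_zero[OF True bnd_P] by simp
        then show ?thesis using True unfolding g_def by simp
      next
        case False
        show ?thesis
        proof (cases "Z (D @ [x]) = 0")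
          case True then show ?thesis unfolding c_def by simp
        next
          case F2: False
          then show ?thesis using False unfolding g_def c_def L_snoc x by (simp add: field_simps)
        qed
      qed
      finally show "ennreal (g th) * ennreal (pr_pi H (par th) pol tau / c) = ennreal (L th (D @ [x]) / Z (D @ [x]))" .
    qed
  qed
  finally show ?case .
qed

definition Sp :: "('o, 'a) policy \<Rightarrow> 'p set" where
  "Sp pol = {th \<in> space nu1. canon H (planner th) = pol}"

lemma Sp_sets[measurable]: "Sp pol \<in> sets nu1"
  unfolding Sp_def using planner_meas by auto

lemma phi_eq: "ps_alg H nu1 par planner D pol = (\<integral>th. indicator (Sp pol) th * L th D \<partial>nu1) / Z D"
proof -
  have Lm[measurable]: "(\<lambda>th. L th D) \<in> borel_measurable nu1" using bnd_meas[OF bnd_L] .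
  have sub: "Sp pol \<subseteq> space nu1" unfolding Sp_def by auto
  have "ps_alg H nu1 par planner D pol = measure (density nu1 (\<lambda>th. ennreal (L th D / Z D))) (Sp pol)"
    unfolding ps_alg_def posterior_eq Sp_def ..
  also have "\<dots> = integral\<^sup>L (density nu1 (\<lambda>th. ennreal (L th D / Z D))) (indicator (Sp pol))"
    using sub by (simp add: Int_absorb2)
  also have "\<dots> = (\<integral>th. L th D / Z D * indicator (Sp pol) th \<partial>nu1)"
    by (subst integral_density) (auto intro!: divide_nonneg_nonneg L_nonneg Z_nonneg)
  also have "\<dots> = (\<integral>th. indicator (Sp pol) th * L th D \<partial>nu1) / Z D"
    by (simp add: integral_divide_zero mult.commute)
  finally show ?thesis .
qed

lemma sum_ind_Sp: "th \<in> space nu1 \<Longrightarrow> (\<Sum>pol\<in>Pi_c H. indicator (Sp pol) th) = (1::real)"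
proof -
  assume th: "th \<in> space nu1"
  have "(\<Sum>pol\<in>Pi_c H. indicator (Sp pol) th) = (\<Sum>pol\<in>Pi_c H. if canon H (planner th) = pol then 1 else (0::real))"
    using th by (intro sum.cong) (auto simp: Sp_def indicator_def)
  also have "\<dots> = 1" by (subst sum.delta'[OF finite_Pi_c]) (simp add: canon_in_Pi_c)
  finally show ?thesis .
qed

lemma mass_eq: "(\<Sum>pol\<in>Pi_c H. ps_alg H nu1 par planner D pol) = (if Z D = 0 then 0 else 1)"
proof -
  have "(\<Sum>pol\<in>Pi_c H. ps_alg H nu1 par planner D pol) = (\<Sum>pol\<in>Pi_c H. (\<integral>th. indicator (Sp pol) th * L th D \<partial>nu1)) / Z D"
    unfolding phi_eq by (simp add: sum_divide_distrib)
  also have "(\<Sum>pol\<in>Pi_c H. (\<integral>th. indicator (Sp pol) th * L th D \<partial>nu1)) = (\<integral>th. (\<Sum>pol\<in>Pi_c H. indicator (Sp pol) th * L th D) \<partial>nu1)"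
    by (rule Bochner_Integration.integral_sum[symmetric]) (intro bnd_integrable bnd_mult bnd_ind Sp_sets bnd_L)
  also have "\<dots> = Z D" unfolding Z_def
    by (intro Bochner_Integration.integral_cong refl) (simp add: sum_distrib_right[symmetric] sum_ind_Sp)
  finally show ?thesis by simp
qed

lemma phi_nonneg: "0 \<le> ps_alg H nu1 par planner D pol"
  unfolding ps_alg_def by simp

end


type_synonym ('o, 'a) hst = "(('o, 'a) policy \<times> ('o \<times> 'a) list) list"

context setting begin

abbreviation "phi \<equiv> ps_alg H nu1 par planner"

definition phiw :: "(('o, 'a) policy \<times> ('o \<times> 'a) list) list \<Rightarrow> real" where
  "phiw D = (\<Prod>j<length D. phi (take j D) (fst (D ! j)))"

lemma phiw_nonneg: "0 \<le> phiw D"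
  unfolding phiw_def by (intro prod_nonneg phi_nonneg)

lemma phiw_snoc: "phiw (D @ [x]) = phiw D * phi D (fst x)"
proof -
  have "phiw (D @ [x]) = (\<Prod>j<length D. phi (take j (D @ [x])) (fst ((D @ [x]) ! j))) * phi D (fst x)"
    unfolding phiw_def by simp
  also have "(\<Prod>j<length D. phi (take j (D @ [x])) (fst ((D @ [x]) ! j))) = phiw D"
    unfolding phiw_def by (intro prod.cong) (auto simp: nth_append)
  finally show ?thesis .
qed

lemma hist_len: "hs \<in> hist_set H n \<Longrightarrow> length hs = n"
  unfolding hist_set_def by auto

lemma joint_eq:
  "joint_exp H nu1 par phi K F = (\<integral>th. (\<Sum>hs\<in>hist_set H K. phiw hs * (L th hs * F th hs)) \<partial>nu1)"
  unfolding joint_exp_def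
proof (intro Bochner_Integration.integral_cong refl sum.cong)
  fix th and hs :: "('o, 'a) hst" assume "hs \<in> hist_set H K"
  then have l: "length hs = K" by (rule hist_len)
  have "(\<Prod>k<K. phi (take k hs) (fst (hs ! k)) * pr_pi H (par th) (fst (hs ! k)) (snd (hs ! k))) = phiw hs * L th hs"
    unfolding phiw_def L_def l by (rule prod.distrib)
  then show "(\<Prod>k<K. phi (take k hs) (fst (hs ! k)) * pr_pi H (par th) (fst (hs ! k)) (snd (hs ! k))) * F th hs =
      phiw hs * (L th hs * F th hs)" by simp
qed

lemma inner_sum:
  fixes g :: "('o, 'a) policy \<Rightarrow> real"
  assumes th: "th \<in> space nu1"
  shows "(\<Sum>x\<in>Pi_c H \<times> traj_set H. phi D (fst x) * pr_pi H (par th) (fst x) (snd x) * g (fst x))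
        = (\<Sum>pol\<in>Pi_c H. phi D pol * g pol)"
proof -
  have "(\<Sum>x\<in>Pi_c H \<times> traj_set H. phi D (fst x) * pr_pi H (par th) (fst x) (snd x) * g (fst x))
      = (\<Sum>pol\<in>Pi_c H. \<Sum>tau\<in>traj_set H. phi D pol * pr_pi H (par th) pol tau * g pol)"
    by (simp add: sum.cartesian_product case_prod_beta)
  also have "\<dots> = (\<Sum>pol\<in>Pi_c H. phi D pol * g pol * (\<Sum>tau\<in>traj_set H. pr_pi H (par th) pol tau))"
    by (simp add: sum_distrib_left mult_ac)
  also have "\<dots> = (\<Sum>pol\<in>Pi_c H. phi D pol * g pol)" by (simp add: P_total[OF th])
  finally show ?thesis .
qed

lemma step_pointwise:
  fixes G :: "'p \<Rightarrow> ('o, 'a) hst \<Rightarrow> ('o, 'a) policy \<Rightarrow> real"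
  assumes th: "th \<in> space nu1"
  shows "(\<Sum>D'\<in>hist_set H (Suc k). phiw D' * (L th D' * G th (take k D') (fst (D' ! k))))
       = (\<Sum>D\<in>hist_set H k. phiw D * (L th D * (\<Sum>pol\<in>Pi_c H. phi D pol * G th D pol)))"
proof -
  have "(\<Sum>D'\<in>hist_set H (Suc k). phiw D' * (L th D' * G th (take k D') (fst (D' ! k))))
      = (\<Sum>D\<in>hist_set H k. \<Sum>x\<in>Pi_c H \<times> traj_set H. phiw (D @ [x]) * (L th (D @ [x]) * G th (take k (D @ [x])) (fst ((D @ [x]) ! k))))"
    by (rule hist_Suc_sum)
  also have "\<dots> = (\<Sum>D\<in>hist_set H k. phiw D * (L th D * (\<Sum>x\<in>Pi_c H \<times> traj_set H. phi D (fst x) * pr_pi H (par th) (fst x) (snd x) * G th D (fst x))))"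
  proof (intro sum.cong refl)
    fix D :: "('o, 'a) hst" assume "D \<in> hist_set H k"
    then have l: "length D = k" by (rule hist_len)
    show "(\<Sum>x\<in>Pi_c H \<times> traj_set H. phiw (D @ [x]) * (L th (D @ [x]) * G th (take k (D @ [x])) (fst ((D @ [x]) ! k))))
       = phiw D * (L th D * (\<Sum>x\<in>Pi_c H \<times> traj_set H. phi D (fst x) * pr_pi H (par th) (fst x) (snd x) * G th D (fst x)))"
      unfolding sum_distrib_left using l by (intro sum.cong refl) (simp add: phiw_snoc L_snoc mult_ac nth_append)
  qed
  also have "\<dots> = (\<Sum>D\<in>hist_set H k. phiw D * (L th D * (\<Sum>pol\<in>Pi_c H. phi D pol * G th D pol)))"
    by (simp only: inner_sum[OF th])
  finally show ?thesis .
qed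

lemma step_int:
  fixes G :: "'p \<Rightarrow> ('o, 'a) hst \<Rightarrow> ('o, 'a) policy \<Rightarrow> real"
  shows "(\<integral>th. (\<Sum>D'\<in>hist_set H (Suc k). phiw D' * (L th D' * G th (take k D') (fst (D' ! k)))) \<partial>nu1)
   = (\<integral>th. (\<Sum>D\<in>hist_set H k. phiw D * (L th D * (\<Sum>pol\<in>Pi_c H. phi D pol * G th D pol))) \<partial>nu1)"
  by (intro Bochner_Integration.integral_cong refl step_pointwise)

lemma int_sum_cL:
  fixes g :: "('o, 'a) hst \<Rightarrow> 'p \<Rightarrow> real"
  assumes "\<And>hs. hs \<in> A \<Longrightarrow> bnd (g hs)"
  shows "(\<integral>th. (\<Sum>hs\<in>A. c hs * (L th hs * g hs th)) \<partial>nu1) = (\<Sum>hs\<in>A. c hs * (\<integral>th. L th hs * g hs th \<partial>nu1))"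
proof -
  have i: "\<And>hs. hs \<in> A \<Longrightarrow> integrable nu1 (\<lambda>th. L th hs * g hs th)"
    using assms by (intro bnd_integrable bnd_mult bnd_L) auto
  have "(\<integral>th. (\<Sum>hs\<in>A. c hs * (L th hs * g hs th)) \<partial>nu1) = (\<Sum>hs\<in>A. (\<integral>th. c hs * (L th hs * g hs th) \<partial>nu1))"
    by (rule Bochner_Integration.integral_sum) (use i in auto)
  also have "\<dots> = (\<Sum>hs\<in>A. c hs * (\<integral>th. L th hs * g hs th \<partial>nu1))"
    by (intro sum.cong refl) (use i in simp)
  finally show ?thesis .
qed

definition mass :: "(('o, 'a) policy \<times> ('o \<times> 'a) list) list \<Rightarrow> real" where
  "mass D = (\<Sum>pol\<in>Pi_c H. phi D pol)"

lemma mass_int: "bnd g \<Longrightarrow> mass D * (\<integral>th. L th D * g th \<partial>nu1) = (\<integral>th. L th D * g th \<partial>nu1)"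
  unfolding mass_def mass_eq using int_L_zero by auto

lemma marg:
  fixes G :: "('o, 'a) hst \<Rightarrow> 'p \<Rightarrow> real"
  assumes mn: "m \<le> n" and G: "\<And>D. bnd (G D)"
  shows "(\<integral>th. (\<Sum>hs\<in>hist_set H n. phiw hs * (L th hs * G (take m hs) th)) \<partial>nu1)
       = (\<integral>th. (\<Sum>D\<in>hist_set H m. phiw D * (L th D * G D th)) \<partial>nu1)"
  using mn
proof (induction n rule: dec_induct)
  case base
  show ?case by (intro Bochner_Integration.integral_cong refl sum.cong) (simp add: hist_len)
next
  case (step n)
  have pw: "(\<Sum>hs\<in>(hist_set H (Suc n) :: ('o, 'a) hst set). phiw hs * (L th hs * G (take m hs) th))
      = (\<Sum>hs\<in>hist_set H n. (phiw hs * mass hs) * (L th hs * G (take m hs) th))" if th: "th \<in> space nu1" for th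
  proof -
    have "(\<Sum>hs\<in>hist_set H (Suc n). phiw hs * (L th hs * G (take m hs) th))
      = (\<Sum>hs\<in>hist_set H n. \<Sum>x\<in>Pi_c H \<times> traj_set H. phiw (hs @ [x]) * (L th (hs @ [x]) * G (take m (hs @ [x])) th))"
      by (rule hist_Suc_sum)
    also have "\<dots> = (\<Sum>hs\<in>hist_set H n. (phiw hs * mass hs) * (L th hs * G (take m hs) th))"
    proof (intro sum.cong refl)
      fix hs :: "('o, 'a) hst" assume "hs \<in> hist_set H n"
      then have l: "length hs = n" by (rule hist_len)
      have "(\<Sum>x\<in>Pi_c H \<times> traj_set H. phiw (hs @ [x]) * (L th (hs @ [x]) * G (take m (hs @ [x])) th))
         = phiw hs * (L th hs * G (take m hs) th) * (\<Sum>x\<in>Pi_c H \<times> traj_set H. phi hs (fst x) * pr_pi H (par th) (fst x) (snd x) * 1)"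
        unfolding sum_distrib_left using l step.hyps by (intro sum.cong refl) (simp add: phiw_snoc L_snoc mult_ac)
      also have "\<dots> = (phiw hs * mass hs) * (L th hs * G (take m hs) th)"
        unfolding mass_def using inner_sum[OF th, of hs "\<lambda>_. 1"] by simp
      finally show "(\<Sum>x\<in>Pi_c H \<times> traj_set H. phiw (hs @ [x]) * (L th (hs @ [x]) * G (take m (hs @ [x])) th))
         = (phiw hs * mass hs) * (L th hs * G (take m hs) th)" .
    qed
    finally show ?thesis .
  qed
  have "(\<integral>th. (\<Sum>hs\<in>hist_set H (Suc n). phiw hs * (L th hs * G (take m hs) th)) \<partial>nu1)
      = (\<integral>th. (\<Sum>hs\<in>hist_set H n. (phiw hs * mass hs) * (L th hs * G (take m hs) th)) \<partial>nu1)"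
    by (intro Bochner_Integration.integral_cong refl pw)
  also have "\<dots> = (\<Sum>hs\<in>hist_set H n. (phiw hs * mass hs) * (\<integral>th. L th hs * G (take m hs) th \<partial>nu1))"
    by (rule int_sum_cL) (rule G)
  also have "\<dots> = (\<Sum>hs\<in>hist_set H n. phiw hs * (\<integral>th. L th hs * G (take m hs) th \<partial>nu1))"
    by (intro sum.cong refl) (simp add: mult.assoc mass_int[OF G])
  also have "\<dots> = (\<integral>th. (\<Sum>hs\<in>hist_set H n. phiw hs * (L th hs * G (take m hs) th)) \<partial>nu1)"
    by (rule int_sum_cL[symmetric]) (rule G)
  also have "\<dots> = (\<integral>th. (\<Sum>D\<in>hist_set H m. phiw D * (L th D * G D th)) \<partial>nu1)"
    by (rule step.IH)
  finally show ?case .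
qed

lemma total_weight: "(\<Sum>D\<in>(hist_set H k :: ('o, 'a) hst set). phiw D * Z D) = 1"
proof -
  have "(\<Sum>D\<in>hist_set H k. phiw D * Z D) = (\<Sum>D\<in>hist_set H k. phiw D * (\<integral>th. L th D * 1 \<partial>nu1))"
    unfolding Z_def by simp
  also have "\<dots> = (\<integral>th. (\<Sum>D\<in>hist_set H k. phiw D * (L th D * 1)) \<partial>nu1)"
    by (rule int_sum_cL[symmetric]) simp
  also have "\<dots> = (\<integral>th. (\<Sum>D\<in>hist_set H 0. phiw D * (L th D * 1)) \<partial>nu1)"
    using marg[of 0 k "\<lambda>(D::('o, 'a) hst) (th::'p). 1::real"] by simp
  also have "\<dots> = 1" by (simp add: hist_0 phiw_def prob_space)
  finally show ?thesis .
qed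

end


lemma tv_dist_image:
  "tv_dist H P Q = Max ((\<lambda>A. \<bar>\<Sum>tau\<in>A. P tau - Q tau\<bar>) ` Pow (traj_set H))"
proof -
  have "{\<bar>\<Sum>tau\<in>A. P tau - Q tau\<bar> | A. A \<subseteq> traj_set H} = (\<lambda>A. \<bar>\<Sum>tau\<in>A. P tau - Q tau\<bar>) ` Pow (traj_set H)"
    by auto
  then show ?thesis unfolding tv_dist_def by simp
qed

lemma tv_ge:
  fixes P Q :: "('o::finite \<times> 'a::finite) list \<Rightarrow> real"
  shows "A \<subseteq> traj_set H \<Longrightarrow> \<bar>\<Sum>tau\<in>A. P tau - Q tau\<bar> \<le> tv_dist H P Q"
  unfolding tv_dist_image by (rule Max_ge) (auto simp: finite_traj_set)

lemma tv_nonneg: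
  fixes P Q :: "('o::finite \<times> 'a::finite) list \<Rightarrow> real"
  shows "0 \<le> tv_dist H P Q"
  using tv_ge[of "{}" H P Q] by simp

lemma tv_sym:
  fixes P Q :: "('o::finite \<times> 'a::finite) list \<Rightarrow> real"
  shows "tv_dist H P Q = tv_dist H Q P"
proof -
  have e: "\<bar>\<Sum>tau\<in>A. P tau - Q tau\<bar> = \<bar>\<Sum>tau\<in>A. Q tau - P tau\<bar>" for A :: "('o \<times> 'a) list set"
  proof -
    have "(\<Sum>tau\<in>A. Q tau - P tau) = - (\<Sum>tau\<in>A. P tau - Q tau)" by (simp add: sum_subtractf)
    then show "\<bar>\<Sum>tau\<in>A. P tau - Q tau\<bar> = \<bar>\<Sum>tau\<in>A. Q tau - P tau\<bar>" by simp
  qed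
  show ?thesis unfolding tv_dist_image
    by (rule arg_cong[of _ _ Max], rule image_cong) (auto simp: e)
qed

lemma tv_le:
  fixes P Q :: "('o::finite \<times> 'a::finite) list \<Rightarrow> real"
  shows "tv_dist H P Q \<le> (\<Sum>tau\<in>traj_set H. \<bar>P tau - Q tau\<bar>)"
  unfolding tv_dist_image
proof (rule Max.boundedI)
  show "finite ((\<lambda>A. \<bar>\<Sum>tau\<in>A. P tau - Q tau\<bar>) ` Pow (traj_set H))" by (simp add: finite_traj_set)
  show "(\<lambda>A. \<bar>\<Sum>tau\<in>A. P tau - Q tau\<bar>) ` Pow (traj_set H) \<noteq> {}" by auto
  fix x assume "x \<in> (\<lambda>A. \<bar>\<Sum>tau\<in>A. P tau - Q tau\<bar>) ` Pow (traj_set H)"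
  then obtain A where A: "A \<subseteq> traj_set H" "x = \<bar>\<Sum>tau\<in>A. P tau - Q tau\<bar>" by auto
  have "x \<le> (\<Sum>tau\<in>A. \<bar>P tau - Q tau\<bar>)" using A(2) by (simp add: sum_abs)
  also have "\<dots> \<le> (\<Sum>tau\<in>traj_set H. \<bar>P tau - Q tau\<bar>)"
    by (rule sum_mono2) (use A(1) finite_traj_set in auto)
  finally show "x \<le> (\<Sum>tau\<in>traj_set H. \<bar>P tau - Q tau\<bar>)" .
qed

lemma sum_diff_tv:
  fixes P Q R :: "('o::finite \<times> 'a::finite) list \<Rightarrow> real"
  assumes R: "\<And>tau. tau \<in> traj_set H \<Longrightarrow> 0 \<le> R tau \<and> R tau \<le> c" and c: "0 \<le> c"
  shows "(\<Sum>tau\<in>traj_set H. (P tau - Q tau) * R tau) \<le> c * tv_dist H P Q"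
proof -
  define A where "A = {tau \<in> traj_set H. Q tau \<le> P tau}"
  have fin: "finite (traj_set H :: ('o \<times> 'a) list set)" by (rule finite_traj_set)
  have A: "A \<subseteq> traj_set H" unfolding A_def by auto
  have "(\<Sum>tau\<in>traj_set H. (P tau - Q tau) * R tau) = (\<Sum>tau\<in>A. (P tau - Q tau) * R tau) + (\<Sum>tau\<in>traj_set H - A. (P tau - Q tau) * R tau)"
    using A fin by (metis (no_types, lifting) add.commute sum.subset_diff)
  also have "(\<Sum>tau\<in>traj_set H - A. (P tau - Q tau) * R tau) \<le> 0"
    by (intro sum_nonpos mult_nonpos_nonneg) (auto simp: A_def R)
  also have "(\<Sum>tau\<in>A. (P tau - Q tau) * R tau) \<le> (\<Sum>tau\<in>A. (P tau - Q tau) * c)"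
    by (intro sum_mono mult_left_mono) (auto simp: A_def R)
  also have "(\<Sum>tau\<in>A. (P tau - Q tau) * c) = c * (\<Sum>tau\<in>A. P tau - Q tau)"
    by (simp add: sum_distrib_left mult.commute)
  also have "\<dots> \<le> c * tv_dist H P Q"
    using tv_ge[OF A, of P Q] c by (intro mult_left_mono) auto
  finally show ?thesis by simp
qed

definition Rw :: "nat \<Rightarrow> (nat \<Rightarrow> 'o \<Rightarrow> 'a \<Rightarrow> real) \<Rightarrow> ('o \<times> 'a) list \<Rightarrow> real" where
  "Rw H r tau = (\<Sum>i<H. r (Suc i) (fst (tau ! i)) (snd (tau ! i)))"

lemma Rw_bounds:
  assumes "\<forall>h\<in>{1..H}. \<forall>ob a. 0 \<le> r h ob a \<and> r h ob a \<le> 1"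
  shows "0 \<le> Rw H r tau" "Rw H r tau \<le> real H"
proof -
  show "0 \<le> Rw H r tau" unfolding Rw_def using assms by (intro sum_nonneg) auto
  have "Rw H r tau \<le> (\<Sum>i<H. 1)" unfolding Rw_def using assms by (intro sum_mono) auto
  then show "Rw H r tau \<le> real H" by simp
qed

lemma value_Rw: "value_fn H r v pol = (\<Sum>tau\<in>traj_set H. pr_pi H v pol tau * Rw H r tau)"
  unfolding value_fn_def Rw_def ..

lemma value_diff_tv:
  fixes v1 v2 :: "('s::finite, 'a::finite, 'o::finite) pvec"
  assumes "\<forall>h\<in>{1..H}. \<forall>ob a. 0 \<le> r h ob a \<and> r h ob a \<le> 1"
  shows "value_fn H r v1 pol - value_fn H r v2 pol \<le> real H * tv_dist H (pr_pi H v1 pol) (pr_pi H v2 pol)"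
proof -
  have "value_fn H r v1 pol - value_fn H r v2 pol = (\<Sum>tau\<in>traj_set H. (pr_pi H v1 pol tau - pr_pi H v2 pol tau) * Rw H r tau)"
    unfolding value_Rw by (simp add: sum_subtractf left_diff_distrib)
  also have "\<dots> \<le> real H * tv_dist H (pr_pi H v1 pol) (pr_pi H v2 pol)"
    by (rule sum_diff_tv) (use Rw_bounds[OF assms] in auto)
  finally show ?thesis .
qed

lemma value_bounds:
  fixes v :: "('s::finite, 'a::finite, 'o::finite) pvec"
  assumes "\<forall>h\<in>{1..H}. \<forall>ob a. 0 \<le> r h ob a \<and> r h ob a \<le> 1" "valid_pvec H v" "1 \<le> H"
  shows "0 \<le> value_fn H r v pol" "value_fn H r v pol \<le> real H"
proof -
  show "0 \<le> value_fn H r v pol" unfolding value_Rw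
    by (intro sum_nonneg mult_nonneg_nonneg pr_pi_nonneg assms Rw_bounds(1))
  have "value_fn H r v pol \<le> (\<Sum>tau\<in>traj_set H. pr_pi H v pol tau * real H)" unfolding value_Rw
    by (intro sum_mono mult_left_mono pr_pi_nonneg assms Rw_bounds(2))
  also have "\<dots> = real H" using total_pr_pi[OF assms(2,3)] by (simp add: sum_distrib_right[symmetric])
  finally show "value_fn H r v pol \<le> real H" .
qed

context setting begin

lemma bnd_V: "bnd (\<lambda>th. value_fn H r (par th) pol)"
  unfolding value_Rw by (intro bnd_sum bnd_mult bnd_P bnd_const)

lemma Vs_eq:
  assumes th: "th \<in> space nu1"
  shows "opt_value H r (par th) = (\<Sum>pol\<in>Pi_c H. indicator (Sp pol) th * value_fn H r (par th) pol)"
proof -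
  have "opt_value H r (par th) = value_fn H r (par th) (planner th)"
    unfolding opt_value_def using planner_opt th by (intro cSup_eq_maximum) auto
  also have "\<dots> = value_fn H r (par th) (canon H (planner th))" by (simp add: value_canon)
  also have "\<dots> = (\<Sum>pol\<in>Pi_c H. if canon H (planner th) = pol then value_fn H r (par th) pol else 0)"
    by (subst sum.delta'[OF finite_Pi_c]) (simp add: canon_in_Pi_c)
  also have "\<dots> = (\<Sum>pol\<in>Pi_c H. indicator (Sp pol) th * value_fn H r (par th) pol)"
    using th by (intro sum.cong refl) (auto simp: Sp_def indicator_def)
  finally show ?thesis .
qed

lemma bnd_Vs: "bnd (\<lambda>th. opt_value H r (par th))"
  by (rule bnd_cong[OF Vs_eq[symmetric]]) (auto intro!: bnd_sum bnd_mult bnd_ind bnd_V)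

definition M :: "('o, 'a) hst \<Rightarrow> ('o, 'a) policy \<Rightarrow> 'p \<Rightarrow> real" where
  "M D pol th = Max ((\<lambda>v. tv_dist H (pr_pi H v pol) (pr_pi H (par th) pol)) ` conf_set H K Tb D)"

lemma conf_sub: "conf_set H K Tb D \<subseteq> Tb"
  unfolding conf_set_def by auto

lemma tv_le2:
  assumes "valid_pvec H v" "th \<in> space nu1"
  shows "tv_dist H (pr_pi H v pol) (pr_pi H (par th) pol) \<le> 2"
proof -
  have "tv_dist H (pr_pi H v pol) (pr_pi H (par th) pol) \<le> (\<Sum>tau\<in>traj_set H. \<bar>pr_pi H v pol tau - pr_pi H (par th) pol tau\<bar>)"
    by (rule tv_le)
  also have "\<dots> \<le> (\<Sum>tau\<in>traj_set H. pr_pi H v pol tau + pr_pi H (par th) pol tau)"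
  proof (intro sum_mono)
    fix tau
    show "\<bar>pr_pi H v pol tau - pr_pi H (par th) pol tau\<bar> \<le> pr_pi H v pol tau + pr_pi H (par th) pol tau"
      using pr_pi_nonneg[OF assms(1), of pol tau] P_nonneg[OF assms(2), of pol tau] by linarith
  qed
  also have "\<dots> = 2" using total_pr_pi[OF assms(1) H] P_total[OF assms(2)] by (simp add: sum.distrib)
  finally show ?thesis .
qed

lemma bnd_M: "bnd (M D pol)"
  unfolding bnd_def
proof (intro conjI)
  have fC: "finite (conf_set H K Tb D)" using conf_sub Tb_fin by (rule finite_subset)
  show "M D pol \<in> borel_measurable nu1"
    unfolding M_def tv_dist_image
  proof (intro borel_measurable_Max fC finite_imageI)
    fix v A
    show "(\<lambda>th. \<bar>\<Sum>tau\<in>A. pr_pi H v pol tau - pr_pi H (par th) pol tau\<bar>) \<in> borel_measurable nu1"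
      using bnd_meas[OF bnd_P] by measurable
  qed (auto simp: finite_traj_set)
  show "\<exists>B. \<forall>x\<in>space nu1. \<bar>M D pol x\<bar> \<le> B"
  proof (intro exI ballI)
    fix th assume th: "th \<in> space nu1"
    show "\<bar>M D pol th\<bar> \<le> max 2 \<bar>Max ({}::real set)\<bar>"
    proof (cases "conf_set H K Tb D = {}")
      case True then show ?thesis unfolding M_def by simp
    next
      case False
      then have "M D pol th \<in> (\<lambda>v. tv_dist H (pr_pi H v pol) (pr_pi H (par th) pol)) ` conf_set H K Tb D"
        unfolding M_def using fC by (intro Max_in) auto
      then obtain v where v: "v \<in> Tb" "M D pol th = tv_dist H (pr_pi H v pol) (pr_pi H (par th) pol)"
        using conf_sub by auto
      have a: "0 \<le> tv_dist H (pr_pi H v pol) (pr_pi H (par th) pol)" by (rule tv_nonneg)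
      have b: "tv_dist H (pr_pi H v pol) (pr_pi H (par th) pol) \<le> 2" using tv_le2[OF _ th, of v pol] Tb_valid v(1) by auto
      show ?thesis using v(2) a b by (simp add: le_max_iff_disj)
    qed
  qed
qed

end


definition Lv :: "nat \<Rightarrow> ('s::finite, 'a, 'o) pvec \<Rightarrow> ('o, 'a) hst \<Rightarrow> real" where
  "Lv H v D = (\<Prod>j<length D. pr_pi H v (fst (D ! j)) (snd (D ! j)))"

lemma Lv_nonneg: "valid_pvec H v \<Longrightarrow> 0 \<le> Lv H v D"
  unfolding Lv_def by (intro prod_nonneg pr_pi_nonneg) auto

lemma Lv_snoc: "Lv H v (D @ [x]) = Lv H v D * pr_pi H v (fst x) (snd x)"
  unfolding Lv_def by (simp add: nth_append)

lemma loglik_eq: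
  assumes v: "valid_pvec H v"
  shows "loglik H v D = (if 0 < Lv H v D then ereal (ln (Lv H v D)) else -\<infinity>)"
proof -
  have iff: "(\<forall>(pol, tau)\<in>set D. 0 < pr_pi H v pol tau) \<longleftrightarrow> (\<forall>j<length D. 0 < pr_pi H v (fst (D ! j)) (snd (D ! j)))"
    by (simp add: all_set_conv_all_nth split_def)
  show ?thesis
  proof (cases "\<forall>j<length D. 0 < pr_pi H v (fst (D ! j)) (snd (D ! j))")
    case True
    then have pos: "0 < Lv H v D" unfolding Lv_def by (intro prod_pos) auto
    have "(\<Sum>(pol, tau)\<leftarrow>D. ln (pr_pi H v pol tau)) = (\<Sum>j = 0..<length D. ln (pr_pi H v (fst (D ! j)) (snd (D ! j))))"
      by (simp add: sum_list_sum_nth case_prod_beta)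
    also have "\<dots> = ln (Lv H v D)" unfolding Lv_def
      using True by (subst ln_prod) (auto simp: atLeast0LessThan)
    finally show ?thesis unfolding loglik_def using True iff pos by simp
  next
    case False
    then obtain j where j: "j < length D" "\<not> 0 < pr_pi H v (fst (D ! j)) (snd (D ! j))" by auto
    then have "pr_pi H v (fst (D ! j)) (snd (D ! j)) = 0" using pr_pi_nonneg[OF v, of "fst (D ! j)" "snd (D ! j)"] by linarith
    then have "Lv H v D = 0" unfolding Lv_def using j(1) by (intro prod_zero) auto
    then show ?thesis unfolding loglik_def using False iff by simp
  qed
qed

context setting begin

lemma L_Lv: "L th D = Lv H (par th) D"
  unfolding L_def Lv_def ..

lemma eps_pos: "0 < eps"
  using H K unfolding eps by simp

lemma e_bound:
  assumes "k \<le> K"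
  shows "(1 + eps) ^ (2 * H * k) \<le> exp 1"
proof -
  have "(1 + eps) ^ (2 * H * k) \<le> (1 + eps) ^ (2 * H * K)"
    using eps_pos assms by (intro power_increasing) auto
  also have "\<dots> \<le> exp eps ^ (2 * H * K)"
    using eps_pos by (intro power_mono) auto
  also have "\<dots> = exp (real (2 * H * K) * eps)" by (rule exp_of_nat_mult[symmetric])
  also have "real (2 * H * K) * eps = 1" using H K unfolding eps by simp
  finally show ?thesis by simp
qed

lemma hist_traj: "D \<in> hist_set H k \<Longrightarrow> j < length D \<Longrightarrow> snd (D ! j) \<in> traj_set H"
  unfolding hist_set_def by (auto dest!: nth_mem)

lemma iota_L:
  assumes th: "th \<in> space nu1" and D: "D \<in> hist_set H k"
  shows "L th D / (1 + eps) ^ (2 * H * k) \<le> Lv H (iota th) D"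
proof -
  have l: "length D = k" using D by (rule hist_len)
  have c: "0 < (1 + eps) ^ (2 * H)" using eps_pos by simp
  have "L th D / (1 + eps) ^ (2 * H * k) = (\<Prod>j<length D. pr_pi H (par th) (fst (D ! j)) (snd (D ! j)) / (1 + eps) ^ (2 * H))"
    unfolding L_def prod_dividef l by (simp add: power_mult)
  also have "\<dots> \<le> Lv H (iota th) D" unfolding Lv_def
  proof (rule prod_mono)
    fix j assume j: "j \<in> {..<length D}"
    have tr: "snd (D ! j) \<in> traj_set H" using hist_traj[OF D] j by auto
    have "pr_pi H (par th) (fst (D ! j)) (snd (D ! j)) / (1 + eps) ^ (2 * H)
        = pol_prob H (fst (D ! j)) (snd (D ! j)) * (pr_minus H (par th) (snd (D ! j)) / (1 + eps) ^ (2 * H))"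
      unfolding pr_pi_def by simp
    also have "\<dots> \<le> pol_prob H (fst (D ! j)) (snd (D ! j)) * pr_minus H (iota th) (snd (D ! j))"
      using iota_lb th tr by (intro mult_left_mono pol_prob_nonneg) auto
    finally show "0 \<le> pr_pi H (par th) (fst (D ! j)) (snd (D ! j)) / (1 + eps) ^ (2 * H) \<and>
       pr_pi H (par th) (fst (D ! j)) (snd (D ! j)) / (1 + eps) ^ (2 * H) \<le> pr_pi H (iota th) (fst (D ! j)) (snd (D ! j))"
      unfolding pr_pi_def using P_nonneg[OF th] c by (auto simp: pr_pi_def intro!: divide_nonneg_pos)
  qed
  finally show ?thesis .
qed

lemma Tb_ne: "Tb \<noteq> {}"
  using iota_onto not_empty by auto

lemma card_Tb: "1 \<le> card Tb"
  using Tb_ne Tb_fin by (simp add: Suc_le_eq card_gt_0_iff)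

lemma iota_Tb: "th \<in> space nu1 \<Longrightarrow> iota th \<in> Tb"
  using iota_onto by auto

lemma conf_mem:
  assumes th: "th \<in> space nu1" and D: "D \<in> hist_set H k" and k: "k \<le> K"
    and all: "\<forall>v\<in>Tb. Lv H v D \<le> real K * real (card Tb) * L th D"
  shows "iota th \<in> conf_set H K Tb D"
proof -
  define c where "c = real K * real (card Tb)"
  have "1 * 1 \<le> real K * real (card Tb)" using K card_Tb by (intro mult_mono) auto
  then have c1: "1 \<le> c" unfolding c_def by simp
  have Lnn: "0 \<le> L th D" using L_nonneg[OF th] .
  have fimg: "finite ((\<lambda>w. loglik H w D) ` Tb)" using Tb_fin by simp
  have neimg: "(\<lambda>w. loglik H w D) ` Tb \<noteq> {}" using Tb_ne by simp
  obtain w0 where w0: "w0 \<in> Tb" "Max ((\<lambda>w. loglik H w D) ` Tb) = loglik H w0 D"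
    using Max_in[OF fimg neimg] by auto
  have vw0: "valid_pvec H w0" using Tb_valid w0 by auto
  have goal: "loglik H w0 D - ereal (ln c) - 1 \<le> loglik H (iota th) D"
  proof (cases "0 < Lv H w0 D")
    case False
    then show ?thesis using loglik_eq[OF vw0] by (simp add: one_ereal_def)
  next
    case True
    have "Lv H w0 D \<le> c * L th D" using all w0 unfolding c_def by auto
    then have "0 < c * L th D" using True by linarith
    then have Lpos: "0 < L th D" using c1 by (simp add: zero_less_mult_iff)
    have e: "(1 + eps) ^ (2 * H * k) \<le> exp 1" by (rule e_bound[OF k])
    have epos: "0 < (1 + eps) ^ (2 * H * k)" using eps_pos by simp
    have "L th D / exp 1 \<le> L th D / (1 + eps) ^ (2 * H * k)"
      using e epos Lpos by (intro divide_left_mono) auto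
    also have "\<dots> \<le> Lv H (iota th) D" by (rule iota_L[OF th D])
    finally have li: "L th D / exp 1 \<le> Lv H (iota th) D" .
    have "0 < L th D / exp 1" using Lpos by simp
    then have lipos: "0 < Lv H (iota th) D" using li by linarith
    have "ln (L th D) - 1 = ln (L th D / exp 1)" using Lpos by (simp add: ln_div)
    also have "\<dots> \<le> ln (Lv H (iota th) D)" using li Lpos by (intro ln_mono) auto
    finally have a: "ln (L th D) - 1 \<le> ln (Lv H (iota th) D)" .
    have "ln (Lv H w0 D) \<le> ln (c * L th D)"
      using True \<open>Lv H w0 D \<le> c * L th D\<close> by (intro ln_mono) auto
    also have "\<dots> = ln c + ln (L th D)" using c1 Lpos by (simp add: ln_mult)
    finally have b: "ln (Lv H w0 D) \<le> ln c + ln (L th D)" .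
    have vi: "valid_pvec H (iota th)" using Tb_valid iota_Tb[OF th] by auto
    show ?thesis using loglik_eq[OF vw0] loglik_eq[OF vi] True lipos a b by (simp add: one_ereal_def)
  qed
  show ?thesis unfolding conf_set_def using iota_Tb[OF th] w0 goal c_def by simp
qed

definition Bad :: "('o, 'a) hst \<Rightarrow> 'p set" where
  "Bad D = {th \<in> space nu1. iota th \<notin> conf_set H K Tb D}"

lemma Bad_sets: "Bad D \<in> sets nu1"
proof -
  have "Bad D = space nu1 - (\<Union>v\<in>conf_set H K Tb D. {th \<in> space nu1. iota th = v})"
    unfolding Bad_def by auto
  also have "\<dots> \<in> sets nu1"
    using conf_sub Tb_fin iota_meas by (intro sets.Diff sets.top sets.finite_UN) (auto intro: finite_subset)
  finally show ?thesis .
qed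

lemma bad_bound:
  assumes th: "th \<in> space nu1" and D: "D \<in> hist_set H k" and k: "k \<le> K"
  shows "L th D * indicator (Bad D) th \<le> (\<Sum>v\<in>Tb. Lv H v D) / (real K * real (card Tb))"
proof -
  have cpos: "0 < real K * real (card Tb)" using K card_Tb by simp
  have snn: "0 \<le> (\<Sum>v\<in>Tb. Lv H v D)" using Tb_valid by (intro sum_nonneg Lv_nonneg) auto
  show ?thesis
  proof (cases "th \<in> Bad D")
    case False
    then show ?thesis using snn cpos by simp
  next
    case True
    then have "iota th \<notin> conf_set H K Tb D" unfolding Bad_def by auto
    then obtain v where v: "v \<in> Tb" "\<not> Lv H v D \<le> real K * real (card Tb) * L th D"
      using conf_mem[OF th D k] by blast
    have "L th D < Lv H v D / (real K * real (card Tb))" using v(2) cpos by (simp add: field_simps)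
    also have "Lv H v D \<le> (\<Sum>v\<in>Tb. Lv H v D)"
      using v(1) Tb_fin Tb_valid by (intro member_le_sum Lv_nonneg) auto
    then have "Lv H v D / (real K * real (card Tb)) \<le> (\<Sum>v\<in>Tb. Lv H v D) / (real K * real (card Tb))"
      using cpos by (intro divide_right_mono) auto
    finally show ?thesis using True by simp
  qed
qed

lemma mass_le1: "mass D \<le> 1"
  unfolding mass_def mass_eq by simp

lemma Wv_le:
  assumes v: "valid_pvec H v"
  shows "(\<Sum>D\<in>hist_set H k. phiw D * Lv H v D) \<le> 1"
proof (induction k)
  case 0
  then show ?case by (simp add: hist_0 phiw_def Lv_def)
next
  case (Suc k)
  have "(\<Sum>D\<in>hist_set H (Suc k). phiw D * Lv H v D)
      = (\<Sum>D\<in>hist_set H k. \<Sum>x\<in>Pi_c H \<times> traj_set H. phiw (D @ [x]) * Lv H v (D @ [x]))"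
    by (rule hist_Suc_sum)
  also have "\<dots> = (\<Sum>D\<in>hist_set H k. phiw D * Lv H v D * mass D)"
  proof (intro sum.cong refl)
    fix D :: "('o, 'a) hst"
    have "(\<Sum>x\<in>Pi_c H \<times> traj_set H. phiw (D @ [x]) * Lv H v (D @ [x]))
       = phiw D * Lv H v D * (\<Sum>x\<in>Pi_c H \<times> traj_set H. phi D (fst x) * pr_pi H v (fst x) (snd x))"
      unfolding sum_distrib_left by (intro sum.cong refl) (simp add: phiw_snoc Lv_snoc mult_ac)
    also have "(\<Sum>x\<in>Pi_c H \<times> traj_set H. phi D (fst x) * pr_pi H v (fst x) (snd x))
       = (\<Sum>pol\<in>Pi_c H. \<Sum>tau\<in>traj_set H. phi D pol * pr_pi H v pol tau)"
      by (simp add: sum.cartesian_product case_prod_beta)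
    also have "\<dots> = (\<Sum>pol\<in>Pi_c H. phi D pol * (\<Sum>tau\<in>traj_set H. pr_pi H v pol tau))"
      by (simp add: sum_distrib_left)
    also have "\<dots> = mass D" unfolding mass_def by (simp add: total_pr_pi[OF v H])
    finally show "(\<Sum>x\<in>Pi_c H \<times> traj_set H. phiw (D @ [x]) * Lv H v (D @ [x])) = phiw D * Lv H v D * mass D" .
  qed
  also have "\<dots> \<le> (\<Sum>D\<in>hist_set H k. phiw D * Lv H v D)"
    using mass_le1 by (intro sum_mono mult_right_le_one_le mult_nonneg_nonneg phiw_nonneg Lv_nonneg v)
      (auto simp: mass_def mass_eq)
  also have "\<dots> \<le> 1" by (rule Suc.IH)
  finally show ?case .
qed

lemma markov:
  assumes k: "k \<le> K"
  shows "(\<Sum>D\<in>hist_set H k. phiw D * (\<integral>th. L th D * indicator (Bad D) th \<partial>nu1)) \<le> 1 / real K"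
proof -
  define c where "c = real K * real (card Tb)"
  have cpos: "0 < c" unfolding c_def using K card_Tb by simp
  have "(\<Sum>D\<in>hist_set H k. phiw D * (\<integral>th. L th D * indicator (Bad D) th \<partial>nu1))
      \<le> (\<Sum>D\<in>hist_set H k. phiw D * ((\<Sum>v\<in>Tb. Lv H v D) / c))"
  proof (intro sum_mono mult_left_mono phiw_nonneg)
    fix D :: "('o, 'a) hst" assume D: "D \<in> hist_set H k"
    have "(\<integral>th. L th D * indicator (Bad D) th \<partial>nu1) \<le> (\<integral>th. (\<Sum>v\<in>Tb. Lv H v D) / c \<partial>nu1)"
      using bad_bound[OF _ D k] unfolding c_def
      by (intro integral_mono bnd_integrable bnd_mult bnd_L bnd_ind Bad_sets bnd_const) auto
    also have "\<dots> = (\<Sum>v\<in>Tb. Lv H v D) / c" by (simp add: prob_space)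
    finally show "(\<integral>th. L th D * indicator (Bad D) th \<partial>nu1) \<le> (\<Sum>v\<in>Tb. Lv H v D) / c" .
  qed
  also have "\<dots> = (\<Sum>D\<in>hist_set H k. \<Sum>v\<in>Tb. phiw D * Lv H v D) / c"
    by (simp add: sum_divide_distrib sum_distrib_left)
  also have "\<dots> = (\<Sum>v\<in>Tb. \<Sum>D\<in>hist_set H k. phiw D * Lv H v D) / c"
    by (subst sum.swap) (rule refl)
  also have "\<dots> \<le> (\<Sum>v\<in>Tb. 1) / c"
    using Tb_valid cpos by (intro divide_right_mono sum_mono Wv_le) auto
  also have "\<dots> = 1 / real K" unfolding c_def using card_Tb by simp
  finally show ?thesis .
qed

end


context setting begin

abbreviation V where "V th pol \<equiv> value_fn H r (par th) pol"

definition Iv :: "('s, 'a, 'o) pvec \<Rightarrow> 'p set" where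
  "Iv v = {th \<in> space nu1. iota th = v}"

definition dl :: "('o, 'a) hst \<Rightarrow> ('s, 'a, 'o) pvec \<Rightarrow> real" where
  "dl D v = (if v \<in> conf_set H K Tb D then 0 else 1)"

lemma Iv_sets: "v \<in> Tb \<Longrightarrow> Iv v \<in> sets nu1"
  unfolding Iv_def using iota_meas by auto

lemma sum_ind_Iv: "th \<in> space nu1 \<Longrightarrow> (\<Sum>v\<in>Tb. indicator (Iv v) th * g v) = (g (iota th) :: real)"
proof -
  assume th: "th \<in> space nu1"
  have "(\<Sum>v\<in>Tb. indicator (Iv v) th * g v) = (\<Sum>v\<in>Tb. if iota th = v then g v else 0)"
    using th by (intro sum.cong) (auto simp: Iv_def indicator_def)
  also have "\<dots> = g (iota th)" using Tb_fin iota_Tb[OF th] by (subst sum.delta') auto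
  finally show ?thesis .
qed

lemma two_H_eps: "2 * real H * eps = 1 / real K"
  using H K unfolding eps by simp

lemma V_iota:
  assumes th: "th \<in> space nu1"
  shows "V th pol \<le> value_fn H r (iota th) pol + real H / real K"
proof -
  have "V th pol - value_fn H r (iota th) pol \<le> real H * tv_dist H (pr_pi H (par th) pol) (pr_pi H (iota th) pol)"
    by (rule value_diff_tv[OF rew])
  also have "tv_dist H (pr_pi H (par th) pol) (pr_pi H (iota th) pol) \<le> 1 / real K"
    using iota_tv th two_H_eps tv_sym by metis
  then have "real H * tv_dist H (pr_pi H (par th) pol) (pr_pi H (iota th) pol) \<le> real H * (1 / real K)"
    by (intro mult_left_mono) auto
  finally show ?thesis by simp
qed

lemma conf_ne: "conf_set H K Tb D \<noteq> {}"
proof -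
  have fimg: "finite ((\<lambda>w. loglik H w D) ` Tb)" using Tb_fin by simp
  have neimg: "(\<lambda>w. loglik H w D) ` Tb \<noteq> {}" using Tb_ne by simp
  obtain w0 where w0: "w0 \<in> Tb" "Max ((\<lambda>w. loglik H w D) ` Tb) = loglik H w0 D"
    using Max_in[OF fimg neimg] by auto
  have vw0: "valid_pvec H w0" using Tb_valid w0 by auto
  have "1 * 1 \<le> real K * real (card Tb)" using K card_Tb by (intro mult_mono) auto
  then have lnc: "0 \<le> ln (real K * real (card Tb))" by simp
  have "loglik H w0 D - ereal (ln (real K * real (card Tb))) - 1 \<le> loglik H w0 D"
    using loglik_eq[OF vw0, of D] lnc by (auto simp: one_ereal_def)
  then have "w0 \<in> conf_set H K Tb D" unfolding conf_set_def using w0 by simp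
  then show ?thesis by auto
qed

lemma tv_le_M:
  assumes "v \<in> conf_set H K Tb D"
  shows "tv_dist H (pr_pi H v pol) (pr_pi H (par th) pol) \<le> M D pol th"
  unfolding M_def using assms conf_sub Tb_fin by (intro Max_ge) (auto intro: finite_subset)

lemma M_nonneg: "0 \<le> M D pol th"
proof -
  obtain v where "v \<in> conf_set H K Tb D" using conf_ne by auto
  then show ?thesis using tv_le_M[of v D pol th] tv_nonneg[of H] by (meson order.trans)
qed

lemma V_conf:
  assumes th: "th \<in> space nu1" and v: "v \<in> Tb"
  shows "value_fn H r v pol - V th pol \<le> real H * dl D v + real H * M D pol th"
proof (cases "v \<in> conf_set H K Tb D")
  case True
  have "value_fn H r v pol - V th pol \<le> real H * tv_dist H (pr_pi H v pol) (pr_pi H (par th) pol)"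
    by (rule value_diff_tv[OF rew])
  also have "\<dots> \<le> real H * M D pol th" using tv_le_M[OF True] by (intro mult_left_mono) auto
  finally show ?thesis using True unfolding dl_def by simp
next
  case False
  have "value_fn H r v pol \<le> real H" using value_bounds(2)[OF rew _ H] Tb_valid v by auto
  moreover have "0 \<le> V th pol" using value_bounds(1)[OF rew valid_par[OF th] H] .
  moreover have "0 \<le> real H * M D pol th" using M_nonneg by simp
  ultimately show ?thesis using False unfolding dl_def by simp
qed

lemma bnd_ind_Iv: "v \<in> Tb \<Longrightarrow> bnd (indicator (Iv v))"
  by (intro bnd_ind Iv_sets)

lemma per_pol:
  assumes Zp: "Z D \<noteq> 0"
  shows "(\<integral>th. indicator (Sp pol) th * L th D * V th pol \<partial>nu1) - phi D pol * (\<integral>th. L th D * V th pol \<partial>nu1)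
    \<le> real H / real K * (\<integral>th. indicator (Sp pol) th * L th D \<partial>nu1)
       + real H * (\<Sum>v\<in>Tb. (\<integral>th. indicator (Sp pol) th * indicator (Iv v) th * L th D \<partial>nu1) * dl D v)
       + real H * (phi D pol * (\<integral>th. L th D * M D pol th \<partial>nu1))"
proof -
  define q where "q v = (\<integral>th. indicator (Sp pol) th * indicator (Iv v) th * L th D \<partial>nu1)" for v
  define a where "a = (\<integral>th. indicator (Sp pol) th * L th D \<partial>nu1)"
  define IV where "IV = (\<integral>th. L th D * V th pol \<partial>nu1)"
  define IM where "IM = (\<integral>th. L th D * M D pol th \<partial>nu1)"
  have Zpos: "0 < Z D" using Zp Z_nonneg by (simp add: order_less_le)
  have q0: "0 \<le> q v" for v unfolding q_def
    by (intro integral_nonneg_AE AE_I2 mult_nonneg_nonneg L_nonneg) auto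
  have bSL: "bnd (\<lambda>th. indicator (Sp pol) th * L th D)" by (intro bnd_mult bnd_ind Sp_sets bnd_L)
  have a_eq: "a = (\<Sum>v\<in>Tb. q v)"
  proof -
    have "(\<Sum>v\<in>Tb. q v) = (\<integral>th. (\<Sum>v\<in>Tb. indicator (Sp pol) th * indicator (Iv v) th * L th D) \<partial>nu1)"
      unfolding q_def
      by (rule Bochner_Integration.integral_sum[symmetric]) (intro bnd_integrable bnd_mult bnd_ind_Iv bnd_ind Sp_sets bnd_L; simp)
    also have "\<dots> = a" unfolding a_def
    proof (intro Bochner_Integration.integral_cong refl)
      fix th assume th: "th \<in> space nu1"
      have "(\<Sum>v\<in>Tb. indicator (Sp pol) th * indicator (Iv v) th * L th D) = (\<Sum>v\<in>Tb. indicator (Iv v) th * (indicator (Sp pol) th * L th D))"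
        by (simp add: mult_ac)
      also have "\<dots> = indicator (Sp pol) th * L th D" by (rule sum_ind_Iv[OF th])
      finally show "(\<Sum>v\<in>Tb. indicator (Sp pol) th * indicator (Iv v) th * L th D) = indicator (Sp pol) th * L th D" .
    qed
    finally show ?thesis by simp
  qed
  have phi_a: "phi D pol = a / Z D" unfolding phi_eq a_def ..
  have s4: "(\<integral>th. indicator (Sp pol) th * L th D * V th pol \<partial>nu1) \<le> (\<Sum>v\<in>Tb. q v * (value_fn H r v pol + real H / real K))"
  proof -
    have "(\<integral>th. indicator (Sp pol) th * L th D * V th pol \<partial>nu1)
        \<le> (\<integral>th. (\<Sum>v\<in>Tb. indicator (Sp pol) th * indicator (Iv v) th * L th D * (value_fn H r v pol + real H / real K)) \<partial>nu1)"
    proof (rule integral_mono)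
      show "integrable nu1 (\<lambda>th. indicator (Sp pol) th * L th D * V th pol)"
        by (intro bnd_integrable bnd_mult bSL bnd_V)
      show "integrable nu1 (\<lambda>th. \<Sum>v\<in>Tb. indicator (Sp pol) th * indicator (Iv v) th * L th D * (value_fn H r v pol + real H / real K))"
        by (intro bnd_integrable bnd_sum bnd_mult bnd_ind_Iv bnd_ind Sp_sets bnd_L bnd_const) auto
      fix th assume th: "th \<in> space nu1"
      have "(\<Sum>v\<in>Tb. indicator (Sp pol) th * indicator (Iv v) th * L th D * (value_fn H r v pol + real H / real K))
          = (\<Sum>v\<in>Tb. indicator (Iv v) th * (indicator (Sp pol) th * L th D * (value_fn H r v pol + real H / real K)))"
        by (simp add: mult_ac)
      also have "\<dots> = indicator (Sp pol) th * L th D * (value_fn H r (iota th) pol + real H / real K)"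
        by (rule sum_ind_Iv[OF th])
      finally have e: "(\<Sum>v\<in>Tb. indicator (Sp pol) th * indicator (Iv v) th * L th D * (value_fn H r v pol + real H / real K))
          = indicator (Sp pol) th * L th D * (value_fn H r (iota th) pol + real H / real K)" .
      show "indicator (Sp pol) th * L th D * V th pol \<le> (\<Sum>v\<in>Tb. indicator (Sp pol) th * indicator (Iv v) th * L th D * (value_fn H r v pol + real H / real K))"
        unfolding e using V_iota[OF th] L_nonneg[OF th] by (intro mult_left_mono mult_nonneg_nonneg) auto
    qed
    also have "\<dots> = (\<Sum>v\<in>Tb. q v * (value_fn H r v pol + real H / real K))"
      unfolding q_def
      by (subst Bochner_Integration.integral_sum) (auto intro!: bnd_integrable bnd_mult bnd_ind_Iv bnd_ind Sp_sets bnd_L bnd_const Iv_sets)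
    finally show ?thesis .
  qed
  have s5: "value_fn H r v pol * Z D - IV \<le> real H * dl D v * Z D + real H * IM" if v: "v \<in> Tb" for v
  proof -
    have "value_fn H r v pol * Z D - IV = (\<integral>th. L th D * (value_fn H r v pol - V th pol) \<partial>nu1)"
    proof -
      have i1: "integrable nu1 (\<lambda>th. L th D * value_fn H r v pol)" by (intro bnd_integrable bnd_mult bnd_L bnd_const)
      have i2: "integrable nu1 (\<lambda>th. L th D * V th pol)" by (intro bnd_integrable bnd_mult bnd_L bnd_V)
      have "(\<integral>th. L th D * (value_fn H r v pol - V th pol) \<partial>nu1) = (\<integral>th. L th D * value_fn H r v pol - L th D * V th pol \<partial>nu1)"
        by (simp add: right_diff_distrib)
      also have "\<dots> = (\<integral>th. L th D * value_fn H r v pol \<partial>nu1) - (\<integral>th. L th D * V th pol \<partial>nu1)"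
        by (rule Bochner_Integration.integral_diff[OF i1 i2])
      also have "\<dots> = value_fn H r v pol * Z D - IV" unfolding Z_def IV_def by (simp add: mult.commute)
      finally show ?thesis by simp
    qed
    also have "\<dots> \<le> (\<integral>th. L th D * (real H * dl D v + real H * M D pol th) \<partial>nu1)"
      using V_conf[OF _ v] by (intro integral_mono bnd_integrable bnd_mult bnd_L bnd_V bnd_diff bnd_add bnd_const bnd_M mult_left_mono L_nonneg) auto
    also have "\<dots> = real H * dl D v * Z D + real H * IM"
    proof -
      have j1: "integrable nu1 (\<lambda>th. L th D * (real H * dl D v))" by (intro bnd_integrable bnd_mult bnd_L bnd_const)
      have j2: "integrable nu1 (\<lambda>th. L th D * (real H * M D pol th))" by (intro bnd_integrable bnd_mult bnd_L bnd_const bnd_M)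
      have "(\<integral>th. L th D * (real H * dl D v + real H * M D pol th) \<partial>nu1) = (\<integral>th. L th D * (real H * dl D v) + L th D * (real H * M D pol th) \<partial>nu1)"
        by (simp add: distrib_left)
      also have "\<dots> = (\<integral>th. L th D * (real H * dl D v) \<partial>nu1) + (\<integral>th. L th D * (real H * M D pol th) \<partial>nu1)"
        by (rule Bochner_Integration.integral_add[OF j1 j2])
      also have "(\<integral>th. L th D * (real H * dl D v) \<partial>nu1) = real H * dl D v * Z D" unfolding Z_def by (simp add: mult.commute)
      also have "(\<integral>th. L th D * (real H * M D pol th) \<partial>nu1) = real H * IM" unfolding IM_def by (simp add: mult.left_commute)
      finally show ?thesis .
    qed
    finally show ?thesis .
  qed
  have "(\<integral>th. indicator (Sp pol) th * L th D * V th pol \<partial>nu1) - phi D pol * IV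
      \<le> (\<Sum>v\<in>Tb. q v * (value_fn H r v pol + real H / real K)) - (\<Sum>v\<in>Tb. q v / Z D * IV)"
    using s4 unfolding phi_a a_eq by (simp add: sum_divide_distrib sum_distrib_right)
  also have "\<dots> = (\<Sum>v\<in>Tb. q v / Z D * (value_fn H r v pol * Z D - IV + real H / real K * Z D))"
    unfolding sum_subtractf[symmetric] using Zp by (intro sum.cong refl) (simp add: field_simps)
  also have "\<dots> \<le> (\<Sum>v\<in>Tb. q v / Z D * (real H * dl D v * Z D + real H * IM + real H / real K * Z D))"
    using s5 q0 Zpos by (intro sum_mono mult_left_mono divide_nonneg_pos add_right_mono) auto
  also have "\<dots> = (\<Sum>v\<in>Tb. real H / real K * q v + real H * (q v * dl D v) + real H * (q v / Z D * IM))"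
    using Zp by (intro sum.cong refl) (simp add: field_simps)
  also have "\<dots> = real H / real K * a + real H * (\<Sum>v\<in>Tb. q v * dl D v) + real H * (phi D pol * IM)"
    unfolding phi_a a_eq
    by (simp add: sum.distrib sum_distrib_left[symmetric] sum_distrib_right[symmetric] sum_divide_distrib[symmetric])
  finally show ?thesis unfolding IV_def IM_def a_def q_def .
qed

end


context setting begin

lemma bnd_G1: "bnd (\<lambda>th. opt_value H r (par th) - V th pol)"
  by (intro bnd_diff bnd_Vs bnd_V)

lemma core:
  assumes D: "D \<in> hist_set H k" and k: "k \<le> K"
  shows "(\<integral>th. L th D * (\<Sum>pol\<in>Pi_c H. phi D pol * (opt_value H r (par th) - V th pol)) \<partial>nu1)
    \<le> real H / real K * Z D + real H * (\<integral>th. L th D * indicator (Bad D) th \<partial>nu1)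
       + real H * (\<integral>th. L th D * (\<Sum>pol\<in>Pi_c H. phi D pol * M D pol th) \<partial>nu1)"
proof (cases "Z D = 0")
  case True
  have "(\<integral>th. L th D * (\<Sum>pol\<in>Pi_c H. phi D pol * (opt_value H r (par th) - V th pol)) \<partial>nu1) = 0"
    by (rule int_L_zero[OF True]) (intro bnd_sum bnd_mult bnd_const bnd_G1)
  moreover have "(\<integral>th. L th D * indicator (Bad D) th \<partial>nu1) = 0"
    by (rule int_L_zero[OF True]) (intro bnd_ind Bad_sets)
  moreover have "(\<integral>th. L th D * (\<Sum>pol\<in>Pi_c H. phi D pol * M D pol th) \<partial>nu1) = 0"
    by (rule int_L_zero[OF True]) (intro bnd_sum bnd_mult bnd_const bnd_M)
  ultimately show ?thesis using True by simp
next
  case False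
  define a where "a pol = (\<integral>th. indicator (Sp pol) th * L th D \<partial>nu1)" for pol
  define q where "q pol v = (\<integral>th. indicator (Sp pol) th * indicator (Iv v) th * L th D \<partial>nu1)" for pol v
  have mass1: "(\<Sum>pol\<in>Pi_c H. phi D pol) = 1" using mass_eq[of D] False by simp
  have sum_a: "(\<Sum>pol\<in>Pi_c H. a pol) = Z D"
  proof -
    have "(\<Sum>pol\<in>Pi_c H. a pol) / Z D = 1" using mass1 unfolding phi_eq a_def by (simp add: sum_divide_distrib)
    then show ?thesis using False by (simp add: field_simps)
  qed
  have bLV: "bnd (\<lambda>th. L th D * V th pol)" for pol by (intro bnd_mult bnd_L bnd_V)
  have "(\<integral>th. L th D * (\<Sum>pol\<in>Pi_c H. phi D pol * (opt_value H r (par th) - V th pol)) \<partial>nu1)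
      = (\<integral>th. (\<Sum>pol\<in>Pi_c H. indicator (Sp pol) th * L th D * V th pol - phi D pol * (L th D * V th pol)) \<partial>nu1)"
  proof (intro Bochner_Integration.integral_cong refl)
    fix th assume th: "th \<in> space nu1"
    have "L th D * (\<Sum>pol\<in>Pi_c H. phi D pol * (opt_value H r (par th) - V th pol))
        = L th D * opt_value H r (par th) * (\<Sum>pol\<in>Pi_c H. phi D pol) - (\<Sum>pol\<in>Pi_c H. phi D pol * (L th D * V th pol))"
      by (simp add: sum_distrib_left sum_subtractf right_diff_distrib mult_ac)
    also have "\<dots> = (\<Sum>pol\<in>Pi_c H. indicator (Sp pol) th * L th D * V th pol) - (\<Sum>pol\<in>Pi_c H. phi D pol * (L th D * V th pol))"
      unfolding mass1 Vs_eq[OF th] by (simp add: sum_distrib_left mult_ac)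
    finally show "L th D * (\<Sum>pol\<in>Pi_c H. phi D pol * (opt_value H r (par th) - V th pol))
       = (\<Sum>pol\<in>Pi_c H. indicator (Sp pol) th * L th D * V th pol - phi D pol * (L th D * V th pol))"
      by (simp add: sum_subtractf)
  qed
  also have "\<dots> = (\<Sum>pol\<in>Pi_c H. (\<integral>th. indicator (Sp pol) th * L th D * V th pol \<partial>nu1) - phi D pol * (\<integral>th. L th D * V th pol \<partial>nu1))"
  proof -
    have "(\<integral>th. (\<Sum>pol\<in>Pi_c H. indicator (Sp pol) th * L th D * V th pol - phi D pol * (L th D * V th pol)) \<partial>nu1)
        = (\<Sum>pol\<in>Pi_c H. (\<integral>th. indicator (Sp pol) th * L th D * V th pol - phi D pol * (L th D * V th pol) \<partial>nu1))"
      by (rule Bochner_Integration.integral_sum) (intro bnd_integrable bnd_diff bnd_mult bnd_ind Sp_sets bnd_L bnd_V bnd_const)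
    also have "\<dots> = (\<Sum>pol\<in>Pi_c H. (\<integral>th. indicator (Sp pol) th * L th D * V th pol \<partial>nu1) - phi D pol * (\<integral>th. L th D * V th pol \<partial>nu1))"
    proof (intro sum.cong refl)
      fix pol
      have i1: "integrable nu1 (\<lambda>th. indicator (Sp pol) th * L th D * V th pol)"
        by (intro bnd_integrable bnd_mult bnd_ind Sp_sets bnd_L bnd_V)
      have i2: "integrable nu1 (\<lambda>th. phi D pol * (L th D * V th pol))"
        by (intro bnd_integrable bnd_mult bnd_const bLV)
      show "(\<integral>th. indicator (Sp pol) th * L th D * V th pol - phi D pol * (L th D * V th pol) \<partial>nu1)
          = (\<integral>th. indicator (Sp pol) th * L th D * V th pol \<partial>nu1) - phi D pol * (\<integral>th. L th D * V th pol \<partial>nu1)"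
        by (subst Bochner_Integration.integral_diff[OF i1 i2]) simp
    qed
    finally show ?thesis .
  qed
  also have "\<dots> \<le> (\<Sum>pol\<in>Pi_c H. real H / real K * a pol + real H * (\<Sum>v\<in>Tb. q pol v * dl D v)
        + real H * (phi D pol * (\<integral>th. L th D * M D pol th \<partial>nu1)))"
    unfolding a_def q_def by (intro sum_mono per_pol[OF False])
  also have "\<dots> = real H / real K * Z D + real H * (\<Sum>pol\<in>Pi_c H. \<Sum>v\<in>Tb. q pol v * dl D v)
        + real H * (\<Sum>pol\<in>Pi_c H. phi D pol * (\<integral>th. L th D * M D pol th \<partial>nu1))"
    by (simp add: sum.distrib sum_distrib_left[symmetric] sum_divide_distrib[symmetric] sum_a)
  also have "(\<Sum>pol\<in>Pi_c H. \<Sum>v\<in>Tb. q pol v * dl D v) = (\<integral>th. L th D * indicator (Bad D) th \<partial>nu1)"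
  proof -
    have "(\<Sum>pol\<in>Pi_c H. \<Sum>v\<in>Tb. q pol v * dl D v) = (\<Sum>pol\<in>Pi_c H. \<Sum>v\<in>Tb. (\<integral>th. indicator (Sp pol) th * indicator (Iv v) th * L th D * dl D v \<partial>nu1))"
      unfolding q_def by simp
    also have "\<dots> = (\<Sum>pol\<in>Pi_c H. (\<integral>th. (\<Sum>v\<in>Tb. indicator (Sp pol) th * indicator (Iv v) th * L th D * dl D v) \<partial>nu1))"
      by (intro sum.cong refl Bochner_Integration.integral_sum[symmetric])
         (intro bnd_integrable bnd_mult bnd_ind Sp_sets Iv_sets bnd_L bnd_const; simp)
    also have "\<dots> = (\<integral>th. (\<Sum>pol\<in>Pi_c H. \<Sum>v\<in>Tb. indicator (Sp pol) th * indicator (Iv v) th * L th D * dl D v) \<partial>nu1)"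
      by (rule Bochner_Integration.integral_sum[symmetric])
         (intro bnd_integrable bnd_sum bnd_mult bnd_ind Sp_sets Iv_sets bnd_L bnd_const; simp)
    also have "\<dots> = (\<integral>th. L th D * indicator (Bad D) th \<partial>nu1)"
    proof (intro Bochner_Integration.integral_cong refl)
      fix th assume th: "th \<in> space nu1"
      have "(\<Sum>pol\<in>Pi_c H. \<Sum>v\<in>Tb. indicator (Sp pol) th * indicator (Iv v) th * L th D * dl D v)
          = (\<Sum>pol\<in>Pi_c H. indicator (Sp pol) th * (\<Sum>v\<in>Tb. indicator (Iv v) th * (L th D * dl D v)))"
        by (simp add: sum_distrib_left mult_ac)
      also have "\<dots> = (\<Sum>pol\<in>Pi_c H. indicator (Sp pol) th * (L th D * dl D (iota th)))"
        by (simp only: sum_ind_Iv[OF th])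
      also have "\<dots> = L th D * dl D (iota th)"
        by (simp add: sum_distrib_right[symmetric] sum_ind_Sp[OF th])
      also have "dl D (iota th) = indicator (Bad D) th"
        using th unfolding dl_def Bad_def by (simp add: indicator_def)
      finally show "(\<Sum>pol\<in>Pi_c H. \<Sum>v\<in>Tb. indicator (Sp pol) th * indicator (Iv v) th * L th D * dl D v) = L th D * indicator (Bad D) th" .
    qed
    finally show ?thesis .
  qed
  also have "(\<Sum>pol\<in>Pi_c H. phi D pol * (\<integral>th. L th D * M D pol th \<partial>nu1)) = (\<integral>th. L th D * (\<Sum>pol\<in>Pi_c H. phi D pol * M D pol th) \<partial>nu1)"
  proof -
    have "(\<integral>th. L th D * (\<Sum>pol\<in>Pi_c H. phi D pol * M D pol th) \<partial>nu1) = (\<integral>th. (\<Sum>pol\<in>Pi_c H. phi D pol * (L th D * M D pol th)) \<partial>nu1)"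
      by (simp add: sum_distrib_left mult_ac)
    also have "\<dots> = (\<Sum>pol\<in>Pi_c H. (\<integral>th. phi D pol * (L th D * M D pol th) \<partial>nu1))"
      by (rule Bochner_Integration.integral_sum) (intro bnd_integrable bnd_mult bnd_const bnd_L bnd_M)
    also have "\<dots> = (\<Sum>pol\<in>Pi_c H. phi D pol * (\<integral>th. L th D * M D pol th \<partial>nu1))"
      by simp
    finally show ?thesis by simp
  qed
  finally show ?thesis .
qed

end


context setting begin

lemma reduce:
  fixes G :: "'p \<Rightarrow> ('o, 'a) hst \<Rightarrow> ('o, 'a) policy \<Rightarrow> real"
  assumes G: "\<And>D pol. bnd (\<lambda>th. G th D pol)" and k: "k < K"
  shows "(\<integral>th. (\<Sum>hs\<in>hist_set H K. phiw hs * (L th hs * G th (take k hs) (fst (hs ! k)))) \<partial>nu1)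
       = (\<integral>th. (\<Sum>D\<in>hist_set H k. phiw D * (L th D * (\<Sum>pol\<in>Pi_c H. phi D pol * G th D pol))) \<partial>nu1)"
proof -
  define G2 where "G2 D' th = G th (take k D') (fst (D' ! k))" for D' th
  have "(\<integral>th. (\<Sum>hs\<in>hist_set H K. phiw hs * (L th hs * G th (take k hs) (fst (hs ! k)))) \<partial>nu1)
      = (\<integral>th. (\<Sum>hs\<in>hist_set H K. phiw hs * (L th hs * G2 (take (Suc k) hs) th)) \<partial>nu1)"
    unfolding G2_def by (simp add: min_def)
  also have "\<dots> = (\<integral>th. (\<Sum>D'\<in>hist_set H (Suc k). phiw D' * (L th D' * G2 D' th)) \<partial>nu1)"
    using k by (intro marg) (auto simp: G2_def G)
  also have "\<dots> = (\<integral>th. (\<Sum>D\<in>hist_set H k. phiw D * (L th D * (\<Sum>pol\<in>Pi_c H. phi D pol * G th D pol))) \<partial>nu1)"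
    unfolding G2_def by (rule step_int)
  finally show ?thesis .
qed

lemma split_k:
  fixes f :: "nat \<Rightarrow> 'p \<Rightarrow> ('o, 'a) hst \<Rightarrow> real"
  assumes f: "\<And>k hs. bnd (\<lambda>th. f k th hs)"
  shows "(\<integral>th. (\<Sum>hs\<in>hist_set H K. phiw hs * (L th hs * (\<Sum>k<K. f k th hs))) \<partial>nu1)
       = (\<Sum>k<K. (\<integral>th. (\<Sum>hs\<in>hist_set H K. phiw hs * (L th hs * f k th hs)) \<partial>nu1))"
proof -
  have "(\<integral>th. (\<Sum>hs\<in>hist_set H K. phiw hs * (L th hs * (\<Sum>k<K. f k th hs))) \<partial>nu1)
      = (\<integral>th. (\<Sum>k<K. \<Sum>hs\<in>hist_set H K. phiw hs * (L th hs * f k th hs)) \<partial>nu1)"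
    by (intro Bochner_Integration.integral_cong refl) (simp add: sum_distrib_left sum.swap[of _ "{..<K}"])
  also have "\<dots> = (\<Sum>k<K. (\<integral>th. (\<Sum>hs\<in>hist_set H K. phiw hs * (L th hs * f k th hs)) \<partial>nu1))"
    by (rule Bochner_Integration.integral_sum) (intro bnd_integrable bnd_sum bnd_mult bnd_const bnd_L f)
  finally show ?thesis .
qed

lemma regret_k:
  assumes k: "k < K"
  shows "(\<integral>th. (\<Sum>hs\<in>hist_set H K. phiw hs * (L th hs * (opt_value H r (par th) - V th (fst (hs ! k))))) \<partial>nu1)
    \<le> 2 * real H / real K + real H * (\<integral>th. (\<Sum>hs\<in>hist_set H K. phiw hs * (L th hs * M (take k hs) (fst (hs ! k)) th)) \<partial>nu1)"
proof -
  have "(\<integral>th. (\<Sum>hs\<in>hist_set H K. phiw hs * (L th hs * (opt_value H r (par th) - V th (fst (hs ! k))))) \<partial>nu1)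
      = (\<integral>th. (\<Sum>D\<in>hist_set H k. phiw D * (L th D * (\<Sum>pol\<in>Pi_c H. phi D pol * (opt_value H r (par th) - V th pol)))) \<partial>nu1)"
    using reduce[of "\<lambda>th D pol. opt_value H r (par th) - V th pol" k] k bnd_G1 by simp
  also have "\<dots> = (\<Sum>D\<in>hist_set H k. phiw D * (\<integral>th. L th D * (\<Sum>pol\<in>Pi_c H. phi D pol * (opt_value H r (par th) - V th pol)) \<partial>nu1))"
    by (rule int_sum_cL) (intro bnd_sum bnd_mult bnd_const bnd_G1)
  also have "\<dots> \<le> (\<Sum>D\<in>hist_set H k. phiw D * (real H / real K * Z D + real H * (\<integral>th. L th D * indicator (Bad D) th \<partial>nu1)
       + real H * (\<integral>th. L th D * (\<Sum>pol\<in>Pi_c H. phi D pol * M D pol th) \<partial>nu1)))"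
    using k by (intro sum_mono mult_left_mono phiw_nonneg core) auto
  also have "\<dots> = real H / real K * (\<Sum>D\<in>hist_set H k. phiw D * Z D)
      + real H * (\<Sum>D\<in>hist_set H k. phiw D * (\<integral>th. L th D * indicator (Bad D) th \<partial>nu1))
      + real H * (\<Sum>D\<in>hist_set H k. phiw D * (\<integral>th. L th D * (\<Sum>pol\<in>Pi_c H. phi D pol * M D pol th) \<partial>nu1))"
    by (simp add: sum.distrib sum_distrib_left distrib_left mult_ac)
  also have "\<dots> \<le> real H / real K * 1 + real H * (1 / real K)
      + real H * (\<Sum>D\<in>hist_set H k. phiw D * (\<integral>th. L th D * (\<Sum>pol\<in>Pi_c H. phi D pol * M D pol th) \<partial>nu1))"
    using markov[of k] k by (intro add_mono mult_left_mono) (auto simp: total_weight)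
  also have "(\<Sum>D\<in>hist_set H k. phiw D * (\<integral>th. L th D * (\<Sum>pol\<in>Pi_c H. phi D pol * M D pol th) \<partial>nu1))
      = (\<integral>th. (\<Sum>D\<in>hist_set H k. phiw D * (L th D * (\<Sum>pol\<in>Pi_c H. phi D pol * M D pol th))) \<partial>nu1)"
    by (rule int_sum_cL[symmetric]) (intro bnd_sum bnd_mult bnd_const bnd_M)
  also have "\<dots> = (\<integral>th. (\<Sum>hs\<in>hist_set H K. phiw hs * (L th hs * M (take k hs) (fst (hs ! k)) th)) \<partial>nu1)"
    using reduce[of "\<lambda>th D pol. M D pol th" k] k bnd_M by simp
  finally show ?thesis by simp
qed

theorem main:
  "breg H r nu1 par (ps_alg H nu1 par planner) K
         \<le> 2 * real H + real H *
           joint_exp H nu1 par (ps_alg H nu1 par planner) K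
             (\<lambda>th hs. \<Sum>k<K. Max ((\<lambda>v. tv_dist H (pr_pi H v (fst (hs ! k))) (pr_pi H (par th) (fst (hs ! k))))
                                   ` conf_set H K Tb (take k hs)))"
proof -
  have bf1: "bnd (\<lambda>th. opt_value H r (par th) - V th (fst (hs ! k)))" for hs k by (rule bnd_G1)
  have bf2: "bnd (\<lambda>th. M (take k hs) (fst (hs ! k)) th)" for hs k by (rule bnd_M)
  have "breg H r nu1 par (ps_alg H nu1 par planner) K
      = (\<Sum>k<K. (\<integral>th. (\<Sum>hs\<in>hist_set H K. phiw hs * (L th hs * (opt_value H r (par th) - V th (fst (hs ! k))))) \<partial>nu1))"
    unfolding breg_def joint_eq
    by (rule split_k[of "\<lambda>k th hs. opt_value H r (par th) - V th (fst (hs ! k))"]) (rule bf1)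
  also have "\<dots> \<le> (\<Sum>k<K. 2 * real H / real K + real H * (\<integral>th. (\<Sum>hs\<in>hist_set H K. phiw hs * (L th hs * M (take k hs) (fst (hs ! k)) th)) \<partial>nu1))"
    by (intro sum_mono regret_k) auto
  also have "\<dots> = 2 * real H + real H * (\<Sum>k<K. (\<integral>th. (\<Sum>hs\<in>hist_set H K. phiw hs * (L th hs * M (take k hs) (fst (hs ! k)) th)) \<partial>nu1))"
    using K by (simp add: sum.distrib sum_distrib_left)
  also have "(\<Sum>k<K. (\<integral>th. (\<Sum>hs\<in>hist_set H K. phiw hs * (L th hs * M (take k hs) (fst (hs ! k)) th)) \<partial>nu1))
      = joint_exp H nu1 par (ps_alg H nu1 par planner) K
             (\<lambda>th hs. \<Sum>k<K. Max ((\<lambda>v. tv_dist H (pr_pi H v (fst (hs ! k))) (pr_pi H (par th) (fst (hs ! k))))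
                                   ` conf_set H K Tb (take k hs)))"
    unfolding joint_eq M_def[symmetric]
    by (rule split_k[of "\<lambda>k th hs. M (take k hs) (fst (hs ! k)) th", symmetric]) (rule bf2)
  finally show ?thesis .
qed

end

theorem lemma1:
  fixes H K :: nat
    and eps :: real
    and r :: "nat \<Rightarrow> 'o::finite \<Rightarrow> 'a::finite \<Rightarrow> real"
    and nu1 :: "'p measure"
    and par :: "'p \<Rightarrow> ('s::finite, 'a, 'o) pvec"
    and planner :: "'p \<Rightarrow> ('o, 'a) policy"
    and Tb :: "('s, 'a, 'o) pvec set"
    and iota :: "'p \<Rightarrow> ('s, 'a, 'o) pvec"
  assumes H: "1 \<le> H" and K: "1 \<le> K"
    and eps: "eps = 1 / (2 * real H * real K)"
    and rew: "\<forall>h\<in>{1..H}. \<forall>ob a. 0 \<le> r h ob a \<and> r h ob a \<le> 1"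
    and prior: "prob_space nu1"
    and par_valid: "\<forall>th\<in>space nu1. valid_pvec H (par th)"
    and par_meas_b: "\<forall>s. (\<lambda>th. init (par th) s) \<in> borel_measurable nu1"
    and par_meas_T: "\<forall>h\<in>{1..<H}. \<forall>s a s'. (\<lambda>th. trans (par th) h s a s') \<in> borel_measurable nu1"
    and par_meas_Z: "\<forall>h\<in>{1..H}. \<forall>s ob. (\<lambda>th. obsv (par th) h s ob) \<in> borel_measurable nu1"
    and planner_opt: "\<forall>th\<in>space nu1. \<forall>pol. value_fn H r (par th) pol \<le> value_fn H r (par th) (planner th)"
    and planner_meas: "\<forall>pol. {th \<in> space nu1. canon H (planner th) = pol} \<in> sets nu1"
    and Tb_fin: "finite Tb"
    and Tb_valid: "\<forall>v\<in>Tb. valid_pvec H v"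
    and iota_onto: "iota ` space nu1 = Tb"
    and iota_meas: "\<forall>v\<in>Tb. {th \<in> space nu1. iota th = v} \<in> sets nu1"
    and iota_tv: "\<forall>th\<in>space nu1. \<forall>pol.
                    tv_dist H (pr_pi H (iota th) pol) (pr_pi H (par th) pol) \<le> 2 * real H * eps"
    and iota_lb: "\<forall>th\<in>space nu1. \<forall>tau\<in>traj_set H.
                    pr_minus H (par th) tau / (1 + eps) ^ (2 * H) \<le> pr_minus H (iota th) tau"
  shows "breg H r nu1 par (ps_alg H nu1 par planner) K
         \<le> 2 * real H + real H *
           joint_exp H nu1 par (ps_alg H nu1 par planner) K
             (\<lambda>th hs. \<Sum>k<K. Max ((\<lambda>v. tv_dist H (pr_pi H v (fst (hs ! k))) (pr_pi H (par th) (fst (hs ! k))))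
                                   ` conf_set H K Tb (take k hs)))"
proof -
  have "setting H K eps r nu1 par planner Tb iota"
    unfolding setting_def using assms by blast
  then show ?thesis by (rule setting.main)
qed


end
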